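(* Let $A$ be a symmetric binary $n\times n$ adjacency matrix and let $d$ be the shortest-path distance of the graph $A$. Let $W=(w_{ij})\in\mathbb R^{n\times n}$ satisfy (i) $\tau:=\sup_i\sum_j|w_{ij}|<1$, and (ii) $A_{ij}=0$ implies $w_{ij}=0$ for all $1\le i,j\le n$. Let $(U_i)_{i\ge1}$ be independent, centered random variables with $\sup_i\|U_i\|_4$ bounded by a constant, and let the noise vector $\epsilon$ follow the network autoregressive (NAR) model $$\epsilon_i=\sum_j w_{ij}\epsilon_j+U_i,\quad 1\le i\le n,$$ i.e. $\epsilon=(I-W)^{-1}U$. Then $\epsilon$ satisfies Assumption 2 (correlation decay, stated in the context) with respect to $d$ with $\rho=\tau^{1/2}$ (and a constant $c$ not depending on $n$).
   Context: For index sets $U,V\subset\{1,\dots,n\}$, $d(U,V)=\min_{i\in U,j\in V}d(i,j)$ and $d(i,U)=d(\{i\},U)$; for $U\subset\{1,\dots,n\}$, $S_U=\sum_{i\in U}\epsilon_i$. Assumption 2 (correlation decay): there are constants $\rho\in(0,1)$ and $c>0$ (independent of $n$) such that (a) $|\mathbb E(\epsilon_i\epsilon_j^\ell)|\le c\rho^{d(i,j)}$ for $\ell\in\{1,2\}$ and all $i,j$; (b) $|\mathrm{Cov}(\epsilon_i\epsilon_j,\epsilon_k\epsilon_l)|\le c\rho^{d(\{i,j\},\{k,l\})}$ for all $i,j,k,l$; (c) for every bounded function $h:\mathbb R\to\mathbb R$ with bounded derivative, every constant $t$, every index $i$ and every index set $U$, $|\mathrm{Cov}(\epsilon_i,h(tS_U))|\le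 c(1+|t||U|)\rho^{d(i,U)}$ (the constant $c$ here may depend on $\|h\|_\infty$ and $\|h'\|_\infty$). *)

theory Defs
  imports "HOL-Probability.Probability" "HOL-Library.Extended_Nat"
begin

definition is_walk :: "(nat \<Rightarrow> nat \<Rightarrow> bool) \<Rightarrow> nat \<Rightarrow> (nat \<Rightarrow> nat) \<Rightarrow> nat \<Rightarrow> nat \<Rightarrow> nat \<Rightarrow> bool" where
  "is_walk A n p k i j \<longleftrightarrow> p 0 = i \<and> p k = j \<and> (\<forall>m\<le>k. p m < n) \<and> (\<forall>m<k. A (p m) (p (Suc m)))"

text \<open>Shortest-path distance (infinite if no path exists).\<close>
definition gdist :: "(nat \<Rightarrow> nat \<Rightarrow> bool) \<Rightarrow> nat \<Rightarrow> nat \<Rightarrow> nat \<Rightarrow> enat" where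
  "gdist A n i j = Inf {enat k | k. \<exists>p. is_walk A n p k i j}"

text \<open>Distance between index sets: minimum over pairs (infinite if a set is empty).\<close>
definition setdist :: "(nat \<Rightarrow> nat \<Rightarrow> enat) \<Rightarrow> nat set \<Rightarrow> nat set \<Rightarrow> enat" where
  "setdist d U V = Inf {d i j | i j. i \<in> U \<and> j \<in> V}"

text \<open>rho to the power of an extended natural; rho^\<infinity> = 0 (the limit for rho < 1).\<close>
definition epow :: "real \<Rightarrow> enat \<Rightarrow> real" where
  "epow \<rho> e = (case e of enat k \<Rightarrow> \<rho> ^ k | \<infinity> \<Rightarrow> 0)"

definition cov :: "'a measure \<Rightarrow> ('a \<Rightarrow> real) \<Rightarrow> ('a \<Rightarrow> real) \<Rightarrow> real" where
  "cov M X Y = prob_space.expectation M (\<lambda>x. X x * Y x)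
               - prob_space.expectation M X * prob_space.expectation M Y"

text \<open>Assumption 2 (correlation decay) for eps_0..eps_{n-1} w.r.t. distance d, with constants
  rho and c; in part (c) the constant c is allowed to depend on the bounds Bh, Bh' for
  the sup norms of h and h'.\<close>
definition assumption2 ::
  "'a measure \<Rightarrow> nat \<Rightarrow> (nat \<Rightarrow> nat \<Rightarrow> enat) \<Rightarrow> (nat \<Rightarrow> 'a \<Rightarrow> real) \<Rightarrow> real \<Rightarrow> real \<Rightarrow> real \<Rightarrow> real \<Rightarrow> bool" where
  "assumption2 M n d \<epsilon> \<rho> c Bh Bh' \<longleftrightarrow>
     (\<forall>i<n. \<forall>j<n. \<forall>l\<in>{1::nat,2}.
        \<bar>prob_space.expectation M (\<lambda>x. \<epsilon> i x * \<epsilon> j x ^ l)\<bar> \<le> c * epow \<rho> (d i j)) \<and>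
     (\<forall>i<n. \<forall>j<n. \<forall>k<n. \<forall>l<n.
        \<bar>cov M (\<lambda>x. \<epsilon> i x * \<epsilon> j x) (\<lambda>x. \<epsilon> k x * \<epsilon> l x)\<bar>
          \<le> c * epow \<rho> (setdist d {i, j} {k, l})) \<and>
     (\<forall>(h::real \<Rightarrow> real) h' t i V.
        (\<forall>x. \<bar>h x\<bar> \<le> Bh) \<longrightarrow> (\<forall>x. (h has_real_derivative h' x) (at x)) \<longrightarrow>
        (\<forall>x. \<bar>h' x\<bar> \<le> Bh') \<longrightarrow> i < n \<longrightarrow> V \<subseteq> {..<n} \<longrightarrow>
        \<bar>cov M (\<epsilon> i) (\<lambda>x. h (t * (\<Sum>k\<in>V. \<epsilon> k x)))\<bar>
          \<le> c * (1 + \<bar>t\<bar> * real (card V)) * epow \<rho> (setdist d {i} V))"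

end

theory Submission
  imports Defs
begin


lemma walk_le: "is_walk A n p k i j \<Longrightarrow> gdist A n i j \<le> enat k"
  unfolding gdist_def by (rule Inf_lower) blast

lemma gdist_walk: assumes "gdist A n i j = enat D" shows "\<exists>p. is_walk A n p D i j"
proof -
  let ?S = "{enat k | k. \<exists>p. is_walk A n p k i j}"
  have ne: "?S \<noteq> {}"
  proof
    assume "?S = {}"
    then have "gdist A n i j = \<infinity>" unfolding gdist_def by (simp add: top_enat_def)
    then show False using assms by simp
  qed
  obtain x0 where "x0 \<in> ?S" using ne by blast
  then have "(LEAST x. x \<in> ?S) \<in> ?S" by (rule LeastI[of "\<lambda>x. x \<in> ?S"])
  then have "gdist A n i j \<in> ?S" using ne by (simp add: gdist_def Inf_enat_def)
  then show ?thesis using assms by auto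
qed

lemma walk_rev: assumes w: "is_walk A n p k i j" and s: "\<forall>i<n. \<forall>j<n. A i j = A j i"
  shows "is_walk A n (\<lambda>m. p (k - m)) k j i"
  unfolding is_walk_def
proof (intro conjI allI impI)
  show "p (k - 0) = j" "p (k - k) = i" using w by (auto simp: is_walk_def)
  show "p (k - m) < n" if "m \<le> k" for m using w by (auto simp: is_walk_def)
  show "A (p (k - m)) (p (k - Suc m))" if "m < k" for m
  proof -
    have a: "A (p (k - Suc m)) (p (Suc (k - Suc m)))" using w that by (auto simp: is_walk_def)
    have e: "Suc (k - Suc m) = k - m" using that by simp
    have "p (k - Suc m) < n" "p (k - m) < n" using w by (auto simp: is_walk_def)
    then show ?thesis using a e s by metis
  qed
qed

lemma gdist_sym: assumes "\<forall>i<n. \<forall>j<n. A i j = A j i" shows "gdist A n i j = gdist A n j i"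
proof -
  have *: "gdist A n j i \<le> gdist A n i j" for i j
  proof (cases "gdist A n i j")
    case (enat D) then obtain p where "is_walk A n p D i j" using gdist_walk by blast
    then have "is_walk A n (\<lambda>m. p (D - m)) D j i" using walk_rev assms by blast
    then show ?thesis using walk_le enat by metis
  qed simp
  show ?thesis using *[of i j] *[of j i] by simp
qed

lemma walk_cat: assumes p: "is_walk A n p a i k" and q: "is_walk A n q b k j"
  shows "is_walk A n (\<lambda>m. if m \<le> a then p m else q (m - a)) (a + b) i j"
  unfolding is_walk_def
proof (intro conjI allI impI)
  have pa: "p a = q 0" using p q by (auto simp: is_walk_def)
  show "(if 0 \<le> a then p 0 else q (0 - a)) = i" using p by (auto simp: is_walk_def)
  show "(if a + b \<le> a then p (a + b) else q (a + b - a)) = j" using p q pa by (auto simp: is_walk_def)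
  show "(if m \<le> a then p m else q (m - a)) < n" if "m \<le> a + b" for m
    using p q that by (auto simp: is_walk_def)
  show "A (if m \<le> a then p m else q (m - a)) (if Suc m \<le> a then p (Suc m) else q (Suc m - a))"
    if "m < a + b" for m
  proof (cases "Suc m \<le> a")
    case True then show ?thesis using p by (auto simp: is_walk_def)
  next
    case False
    show ?thesis
    proof (cases "m = a")
      case True
      then have "0 < b" using that by simp
      then have "A (q 0) (q (Suc 0))" using q by (auto simp: is_walk_def)
      then show ?thesis using True pa by simp
    next
      case F2: False
      then have "A (q (m - a)) (q (Suc (m - a)))" using q that False by (auto simp: is_walk_def)
      moreover have "Suc (m - a) = Suc m - a" using False by simp
      ultimately show ?thesis using False F2 by simp
    qed
  qed
qed

lemma gdist_tri: "gdist A n i j \<le> gdist A n i k + gdist A n k j"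
proof (cases "gdist A n i k")
  case (enat a)
  show ?thesis
  proof (cases "gdist A n k j")
    case (enat b)
    obtain p q where "is_walk A n p a i k" "is_walk A n q b k j"
      using gdist_walk \<open>gdist A n i k = enat a\<close> enat by blast
    then have "gdist A n i j \<le> enat (a + b)" using walk_cat walk_le by blast
    then show ?thesis using \<open>gdist A n i k = enat a\<close> enat by simp
  qed simp
qed simp




fun Pw :: "nat \<Rightarrow> (nat \<Rightarrow> nat \<Rightarrow> real) \<Rightarrow> nat \<Rightarrow> nat \<Rightarrow> nat \<Rightarrow> real" where
  "Pw n W 0 i j = (if i = j then 1 else 0)"
| "Pw n W (Suc m) i j = (\<Sum>k<n. W i k * Pw n W m k j)"

definition Bm :: "nat \<Rightarrow> (nat \<Rightarrow> nat \<Rightarrow> real) \<Rightarrow> nat \<Rightarrow> nat \<Rightarrow> real" where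
  "Bm n W i j = (\<Sum>p. Pw n W p i j)"

locale mx =
  fixes n :: nat and A :: "nat \<Rightarrow> nat \<Rightarrow> bool" and W :: "nat \<Rightarrow> nat \<Rightarrow> real" and \<tau> :: real
  assumes tau0: "0 \<le> \<tau>" and tau1: "\<tau> < 1"
    and rows: "\<forall>i<n. (\<Sum>j<n. \<bar>W i j\<bar>) \<le> \<tau>"
    and supp: "\<forall>i<n. \<forall>j<n. \<not> A i j \<longrightarrow> W i j = 0"
    and symA: "\<forall>i<n. \<forall>j<n. A i j = A j i"
begin

abbreviation "P \<equiv> Pw n W"
abbreviation "B \<equiv> Bm n W"
abbreviation "d \<equiv> gdist A n"

lemma P_rows: "i < n \<Longrightarrow> (\<Sum>j<n. \<bar>P m i j\<bar>) \<le> \<tau> ^ m"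
proof (induction m arbitrary: i)
  case 0
  have "(\<Sum>j<n. \<bar>P 0 i j\<bar>) = (\<Sum>j<n. if i = j then 1 else 0)" by (intro sum.cong) auto
  also have "\<dots> = 1" using 0 by simp
  finally show ?case by simp
next
  case (Suc m)
  have "(\<Sum>j<n. \<bar>P (Suc m) i j\<bar>) \<le> (\<Sum>j<n. \<Sum>k<n. \<bar>W i k\<bar> * \<bar>P m k j\<bar>)"
    by (auto intro!: sum_mono sum_abs[THEN order_trans] simp: abs_mult)
  also have "\<dots> = (\<Sum>k<n. \<bar>W i k\<bar> * (\<Sum>j<n. \<bar>P m k j\<bar>))"
    by (subst sum.swap) (simp add: sum_distrib_left)
  also have "\<dots> \<le> (\<Sum>k<n. \<bar>W i k\<bar> * \<tau> ^ m)"
    using Suc.IH by (intro sum_mono mult_left_mono) auto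
  also have "\<dots> = (\<Sum>k<n. \<bar>W i k\<bar>) * \<tau> ^ m" by (simp add: sum_distrib_right)
  also have "\<dots> \<le> \<tau> * \<tau> ^ m" using rows Suc.prems tau0 by (intro mult_right_mono) auto
  finally show ?case by simp
qed

lemma P_entry: "i < n \<Longrightarrow> j < n \<Longrightarrow> \<bar>P m i j\<bar> \<le> \<tau> ^ m"
  using P_rows[of i m] member_le_sum[of j "{..<n}" "\<lambda>j. \<bar>P m i j\<bar>"] by fastforce

lemma P_dist: "i < n \<Longrightarrow> j < n \<Longrightarrow> P m i j \<noteq> 0 \<Longrightarrow> d i j \<le> enat m"
proof (induction m arbitrary: i)
  case 0
  then have "i = j" by (auto split: if_splits)
  then have "is_walk A n (\<lambda>_. i) 0 i j" using 0 by (auto simp: is_walk_def)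
  then show ?case by (rule walk_le)
next
  case (Suc m)
  then obtain k where k: "k < n" "W i k * P m k j \<noteq> 0"
    by (metis (no_types, lifting) Pw.simps(2) lessThan_iff sum.neutral)
  then have "A i k" using supp Suc.prems by auto
  then have "is_walk A n (\<lambda>m. if m = 0 then i else k) 1 i k" using k Suc.prems by (auto simp: is_walk_def)
  then have "d i k \<le> enat 1" by (rule walk_le)
  moreover have "d k j \<le> enat m" using Suc.IH k Suc.prems by auto
  ultimately have "d i k + d k j \<le> enat 1 + enat m" by (intro add_mono)
  then show ?case using gdist_tri[of A n i j k] by (simp add: order_trans)
qed

lemma P_summable: "i < n \<Longrightarrow> j < n \<Longrightarrow> summable (\<lambda>p. \<bar>P p i j\<bar>)"
  using P_entry tau0 tau1
  by (intro summable_rabs_comparison_test[of _ "\<lambda>p. \<tau>^p"]) (auto intro!: summable_geometric)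

lemma B_tail: assumes "i < n"
  shows "(\<Sum>j\<in>{j. j < n \<and> enat m \<le> d i j}. \<bar>B i j\<bar>) \<le> \<tau> ^ m / (1 - \<tau>)"
proof -
  let ?J = "{j. j < n \<and> enat m \<le> d i j}"
  define g where "g p = (if p < m then 0 else \<tau> ^ p)" for p
  have gs: "g sums (\<tau> ^ m / (1 - \<tau>))"
  proof -
    have "(\<lambda>p. \<tau> ^ m * \<tau> ^ p) sums (\<tau> ^ m * (1 / (1 - \<tau>)))"
      using tau0 tau1 by (intro sums_mult geometric_sums) auto
    then have "(\<lambda>p. g (p + m)) sums (\<tau> ^ m / (1 - \<tau>))"
      by (simp add: g_def power_add mult.commute)
    moreover have "(\<Sum>p<m. g p) = 0" by (simp add: g_def)
    ultimately show ?thesis by (simp add: sums_iff_shift)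
  qed
  have "(\<Sum>j\<in>?J. \<bar>B i j\<bar>) \<le> (\<Sum>j\<in>?J. \<Sum>p. \<bar>P p i j\<bar>)"
  proof (rule sum_mono)
    fix j assume "j \<in> ?J"
    then have "summable (\<lambda>p. \<bar>P p i j\<bar>)" using assms P_summable by simp
    then show "\<bar>B i j\<bar> \<le> (\<Sum>p. \<bar>P p i j\<bar>)" unfolding Bm_def by (rule summable_rabs)
  qed
  also have "\<dots> = (\<Sum>p. \<Sum>j\<in>?J. \<bar>P p i j\<bar>)"
    using assms P_summable by (intro suminf_sum[symmetric]) auto
  also have "\<dots> \<le> (\<Sum>p. g p)"
  proof (rule suminf_le)
    show "summable (\<lambda>p. \<Sum>j\<in>?J. \<bar>P p i j\<bar>)" using assms P_summable by (intro summable_sum) auto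
    show "summable g" using gs by (rule sums_summable)
    fix p show "(\<Sum>j\<in>?J. \<bar>P p i j\<bar>) \<le> g p"
    proof (cases "p < m")
      case True
      have "P p i j = 0" if "j \<in> ?J" for j
      proof (rule ccontr)
        assume "P p i j \<noteq> 0"
        then have "d i j \<le> enat p" using P_dist assms that by auto
        moreover have "enat m \<le> d i j" using that by simp
        ultimately have "enat m \<le> enat p" by (rule order_trans[rotated])
        then show False using True by simp
      qed
      then show ?thesis using True by (simp add: g_def)
    next
      case False
      have "(\<Sum>j\<in>?J. \<bar>P p i j\<bar>) \<le> (\<Sum>j<n. \<bar>P p i j\<bar>)" by (intro sum_mono2) auto
      then show ?thesis using False P_rows[OF assms, of p] by (simp add: g_def)
    qed
  qed
  also have "\<dots> = \<tau> ^ m / (1 - \<tau>)" using gs by (simp add: sums_iff)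
  finally show ?thesis .
qed

lemma B_rows: "i < n \<Longrightarrow> (\<Sum>j<n. \<bar>B i j\<bar>) \<le> 1 / (1 - \<tau>)"
  using B_tail[of i 0] by (simp add: lessThan_def zero_enat_def[symmetric])

lemma B_entry: "i < n \<Longrightarrow> j < n \<Longrightarrow> \<bar>B i j\<bar> \<le> 1 / (1 - \<tau>)"
  using B_rows[of i] member_le_sum[of j "{..<n}" "\<lambda>j. \<bar>B i j\<bar>"] by fastforce

lemma B_dist: assumes "i < n" "j < n" "B i j \<noteq> 0" shows "d i j \<noteq> \<infinity>"
proof -
  have "\<exists>p. P p i j \<noteq> 0"
  proof (rule ccontr)
    assume "\<not> ?thesis"
    then have "(\<lambda>p. P p i j) = (\<lambda>_. 0)" by auto
    then show False using assms(3) unfolding Bm_def by simp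
  qed
  then obtain p where "P p i j \<noteq> 0" by blast
  then have "d i j \<le> enat p" using P_dist assms by blast
  then show ?thesis by (cases "d i j") auto
qed

lemma pair: assumes i: "i < n" and j: "j < n"
  shows "(\<Sum>a<n. \<bar>B i a\<bar> * \<bar>B j a\<bar>) \<le> 2 / (1 - \<tau>)^2 * epow (sqrt \<tau>) (d i j)"
proof (cases "d i j")
  case infinity
  have "\<bar>B i a\<bar> * \<bar>B j a\<bar> = 0" if "a < n" for a
  proof (rule ccontr)
    assume "\<bar>B i a\<bar> * \<bar>B j a\<bar> \<noteq> 0"
    then have "d i a \<noteq> \<infinity>" "d j a \<noteq> \<infinity>" using B_dist i j that by auto
    moreover have "d j a = d a j" using gdist_sym symA by metis
    ultimately have "d i a + d a j \<noteq> \<infinity>" by auto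
    then show False using gdist_tri[of A n i j a] infinity by auto
  qed
  then have "(\<Sum>a<n. \<bar>B i a\<bar> * \<bar>B j a\<bar>) = 0" by (intro sum.neutral) auto
  then show ?thesis using infinity by (simp add: epow_def)
next
  case (enat D0)
  define m where "m = (D0 + 1) div 2"
  define C0 where "C0 = 1 / (1 - \<tau>)"
  have C0: "0 \<le> C0" using tau1 by (simp add: C0_def)
  let ?J1 = "{a. a < n \<and> enat m \<le> d i a}"
  let ?J2 = "{a. a < n \<and> \<not> enat m \<le> d i a}"
  have J2: "enat m \<le> d j a" if a2: "a \<in> ?J2" for a
  proof (rule ccontr)
    assume "\<not> enat m \<le> d j a"
    then obtain y where y: "d j a = enat y" "y < m" by (cases "d j a") auto
    obtain x where x: "d i a = enat x" "x < m" using a2 by (cases "d i a") auto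
    have "d a j = enat y" using y gdist_sym symA by metis
    then have "enat D0 \<le> enat (x + y)" using gdist_tri[of A n i j a] x enat by simp
    then show False using x y unfolding m_def by simp
  qed
  have un: "{..<n} = ?J1 \<union> ?J2" by auto
  have s: "(\<Sum>a<n. \<bar>B i a\<bar> * \<bar>B j a\<bar>) = (\<Sum>a\<in>?J1. \<bar>B i a\<bar> * \<bar>B j a\<bar>) + (\<Sum>a\<in>?J2. \<bar>B i a\<bar> * \<bar>B j a\<bar>)"
    by (subst un, rule sum.union_disjoint) auto
  have "(\<Sum>a\<in>?J1. \<bar>B i a\<bar> * \<bar>B j a\<bar>) \<le> (\<Sum>a\<in>?J1. \<bar>B i a\<bar> * C0)"
    using B_entry j unfolding C0_def by (intro sum_mono mult_left_mono) auto
  also have "\<dots> = (\<Sum>a\<in>?J1. \<bar>B i a\<bar>) * C0" by (simp add: sum_distrib_right)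
  also have "\<dots> \<le> (\<tau> ^ m * C0) * C0"
    using B_tail[OF i, of m] C0 unfolding C0_def by (intro mult_right_mono) auto
  finally have s1: "(\<Sum>a\<in>?J1. \<bar>B i a\<bar> * \<bar>B j a\<bar>) \<le> (\<tau> ^ m * C0) * C0" .
  have "(\<Sum>a\<in>?J2. \<bar>B i a\<bar> * \<bar>B j a\<bar>) \<le> (\<Sum>a\<in>?J2. C0 * \<bar>B j a\<bar>)"
    using B_entry i unfolding C0_def by (intro sum_mono mult_right_mono) auto
  also have "\<dots> = C0 * (\<Sum>a\<in>?J2. \<bar>B j a\<bar>)" by (simp add: sum_distrib_left)
  finally have s2a: "(\<Sum>a\<in>?J2. \<bar>B i a\<bar> * \<bar>B j a\<bar>) \<le> C0 * (\<Sum>a\<in>?J2. \<bar>B j a\<bar>)" .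
  have "(\<Sum>a\<in>?J2. \<bar>B j a\<bar>) \<le> (\<Sum>a\<in>{a. a < n \<and> enat m \<le> d j a}. \<bar>B j a\<bar>)"
    using J2 by (intro sum_mono2) auto
  also have "\<dots> \<le> \<tau> ^ m * C0" using B_tail[OF j, of m] unfolding C0_def by simp
  finally have "C0 * (\<Sum>a\<in>?J2. \<bar>B j a\<bar>) \<le> C0 * (\<tau> ^ m * C0)" using C0 by (intro mult_left_mono)
  with s2a have s2: "(\<Sum>a\<in>?J2. \<bar>B i a\<bar> * \<bar>B j a\<bar>) \<le> C0 * (\<tau> ^ m * C0)" by linarith
  have e: "(\<tau> ^ m * C0) * C0 + C0 * (\<tau> ^ m * C0) = 2 * C0^2 * \<tau> ^ m" by (simp add: power2_eq_square)
  have 1: "(\<Sum>a<n. \<bar>B i a\<bar> * \<bar>B j a\<bar>) \<le> 2 * C0^2 * \<tau> ^ m"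
    using s s1 s2 e by linarith
  have "\<tau> ^ m = sqrt \<tau> ^ (2 * m)" using tau0 by (simp add: power_mult)
  also have "\<dots> \<le> sqrt \<tau> ^ D0" using tau0 tau1 unfolding m_def
    by (intro power_decreasing) (auto simp: real_sqrt_le_1_iff)
  finally have "2 * C0^2 * \<tau> ^ m \<le> 2 * C0^2 * sqrt \<tau> ^ D0" by (intro mult_left_mono) auto
  with 1 have "(\<Sum>a<n. \<bar>B i a\<bar> * \<bar>B j a\<bar>) \<le> 2 * C0^2 * sqrt \<tau> ^ D0" by linarith
  moreover have "2 * C0^2 = 2 / (1 - \<tau>)^2" by (simp add: C0_def power_divide)
  ultimately show ?thesis using enat by (simp add: epow_def)
qed

lemma expand: assumes eq: "\<forall>i<n. e i = (\<Sum>j<n. W i j * e j) + u i"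
  shows "\<forall>i<n. e i = (\<Sum>j<n. P m i j * e j) + (\<Sum>j<n. (\<Sum>p<m. P p i j) * u j)"
proof (induction m)
  case 0
  have "(\<Sum>j<n. P 0 i j * e j) = e i" if "i < n" for i
  proof -
    have "(\<Sum>j<n. P 0 i j * e j) = (\<Sum>j<n. if i = j then e j else 0)" by (intro sum.cong) auto
    then show ?thesis using that by simp
  qed
  then show ?case by simp
next
  case (Suc m)
  show ?case
  proof (intro allI impI)
    fix i assume i: "i < n"
    have a: "(\<Sum>k<n. W i k * (\<Sum>j<n. P m k j * e j)) = (\<Sum>j<n. P (Suc m) i j * e j)"
      by (simp add: sum_distrib_left sum_distrib_right mult.assoc) (rule sum.swap)
    have b: "(\<Sum>k<n. W i k * (\<Sum>j<n. (\<Sum>p<m. P p k j) * u j)) = (\<Sum>j<n. (\<Sum>p<m. P (Suc p) i j) * u j)"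
    proof -
      have "(\<Sum>k<n. W i k * (\<Sum>j<n. (\<Sum>p<m. P p k j) * u j)) = (\<Sum>k<n. \<Sum>j<n. \<Sum>p<m. W i k * P p k j * u j)"
        by (simp add: sum_distrib_left sum_distrib_right mult.assoc)
      also have "\<dots> = (\<Sum>j<n. \<Sum>k<n. \<Sum>p<m. W i k * P p k j * u j)" by (rule sum.swap)
      also have "\<dots> = (\<Sum>j<n. \<Sum>p<m. \<Sum>k<n. W i k * P p k j * u j)" by (rule sum.cong[OF refl]) (rule sum.swap)
      also have "\<dots> = (\<Sum>j<n. (\<Sum>p<m. P (Suc p) i j) * u j)"
        by (simp add: sum_distrib_left sum_distrib_right mult.assoc)
      finally show ?thesis .
    qed
    have c: "(\<Sum>j<n. (\<Sum>p<Suc m. P p i j) * u j) = u i + (\<Sum>j<n. (\<Sum>p<m. P (Suc p) i j) * u j)"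
    proof -
      have "(\<Sum>j<n. (\<Sum>p<Suc m. P p i j) * u j) = (\<Sum>j<n. P 0 i j * u j + (\<Sum>p<m. P (Suc p) i j) * u j)"
        by (simp only: sum.lessThan_Suc_shift distrib_right)
      also have "\<dots> = (\<Sum>j<n. P 0 i j * u j) + (\<Sum>j<n. (\<Sum>p<m. P (Suc p) i j) * u j)"
        by (rule sum.distrib)
      also have "(\<Sum>j<n. P 0 i j * u j) = (\<Sum>j<n. if i = j then u j else 0)" by (intro sum.cong) auto
      also have "\<dots> = u i" using i by simp
      finally show ?thesis .
    qed
    have "e i = (\<Sum>k<n. W i k * e k) + u i" using eq i by blast
    also have "(\<Sum>k<n. W i k * e k) = (\<Sum>k<n. W i k * ((\<Sum>j<n. P m k j * e j) + (\<Sum>j<n. (\<Sum>p<m. P p k j) * u j)))"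
      using Suc.IH by (intro sum.cong) auto
    also have "\<dots> = (\<Sum>k<n. W i k * (\<Sum>j<n. P m k j * e j)) + (\<Sum>k<n. W i k * (\<Sum>j<n. (\<Sum>p<m. P p k j) * u j))"
      by (simp add: distrib_left sum.distrib)
    finally show "e i = (\<Sum>j<n. P (Suc m) i j * e j) + (\<Sum>j<n. (\<Sum>p<Suc m. P p i j) * u j)"
      using a b c by simp
  qed
qed

lemma B_repr: assumes eq: "\<forall>i<n. e i = (\<Sum>j<n. W i j * e j) + u i" and i: "i < n"
  shows "e i = (\<Sum>j<n. B i j * u j)"
proof -
  have ex: "e i = (\<Sum>j<n. P m i j * e j) + (\<Sum>j<n. (\<Sum>p<m. P p i j) * u j)" for m
    using expand[OF eq] i by blast
  have l1: "(\<lambda>m. \<Sum>j<n. P m i j * e j) \<longlonglongrightarrow> 0"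
  proof (rule Lim_null_comparison)
    show "\<forall>\<^sub>F m in sequentially. norm (\<Sum>j<n. P m i j * e j) \<le> \<tau> ^ m * (\<Sum>j<n. \<bar>e j\<bar>)"
    proof (intro always_eventually allI)
      fix m
      have "norm (\<Sum>j<n. P m i j * e j) \<le> (\<Sum>j<n. \<bar>P m i j\<bar> * \<bar>e j\<bar>)"
        unfolding real_norm_def by (rule order_trans[OF sum_abs]) (simp add: abs_mult)
      also have "\<dots> \<le> (\<Sum>j<n. \<tau> ^ m * \<bar>e j\<bar>)"
        using P_entry i by (intro sum_mono mult_right_mono) auto
      finally show "norm (\<Sum>j<n. P m i j * e j) \<le> \<tau> ^ m * (\<Sum>j<n. \<bar>e j\<bar>)"
        by (simp add: sum_distrib_left)
    qed
    show "(\<lambda>m. \<tau> ^ m * (\<Sum>j<n. \<bar>e j\<bar>)) \<longlonglongrightarrow> 0"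
      using tau0 tau1 by (intro tendsto_mult_left_zero LIMSEQ_power_zero) auto
  qed
  have l2: "(\<lambda>m. \<Sum>j<n. (\<Sum>p<m. P p i j) * u j) \<longlonglongrightarrow> (\<Sum>j<n. B i j * u j)"
  proof (rule tendsto_sum)
    fix j assume "j \<in> {..<n}"
    then have "summable (\<lambda>p. P p i j)" using P_summable i summable_rabs_cancel by auto
    then have "(\<lambda>m. \<Sum>p<m. P p i j) \<longlonglongrightarrow> B i j" unfolding Bm_def by (rule summable_LIMSEQ)
    then show "(\<lambda>m. (\<Sum>p<m. P p i j) * u j) \<longlonglongrightarrow> B i j * u j" by (rule tendsto_mult_right)
  qed
  have "(\<lambda>m. e i) \<longlonglongrightarrow> 0 + (\<Sum>j<n. B i j * u j)"
    using tendsto_add[OF l1 l2] by (simp only: ex[symmetric])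
  then show ?thesis by (simp add: LIMSEQ_const_iff)
qed

end



lemma lipschitz_deriv:
  fixes h h' :: "real \<Rightarrow> real"
  assumes d: "\<forall>x. (h has_real_derivative h' x) (at x)" and b: "\<forall>x. \<bar>h' x\<bar> \<le> L"
  shows "\<bar>h x - h y\<bar> \<le> L * \<bar>x - y\<bar>"
proof -
  have *: "\<bar>h b - h a\<bar> \<le> L * \<bar>b - a\<bar>" if ab: "a < b" for a b
  proof -
    obtain z where "h b - h a = (b - a) * h' z" using MVT2[OF ab, of h h'] d by blast
    then have "\<bar>h b - h a\<bar> = \<bar>b - a\<bar> * \<bar>h' z\<bar>" by (simp add: abs_mult)
    also have "\<dots> \<le> \<bar>b - a\<bar> * L" using b by (intro mult_left_mono) auto
    finally show ?thesis by (simp add: mult.commute)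
  qed
  consider "x < y" | "x = y" | "y < x" by linarith
  then show ?thesis
  proof cases
    case 1 then show ?thesis using *[OF 1] by (simp add: abs_minus_commute)
  next
    case 2 then show ?thesis using b[rule_format, of 0] by simp
  next
    case 3 then show ?thesis using *[OF 3] by simp
  qed
qed

lemma amgm2: fixes x y :: real shows "2 * (x * y) \<le> x^2 + y^2"
proof -
  have "0 \<le> (x - y)^2" by simp
  then show ?thesis by (simp add: power2_diff)
qed

lemma amgm4: fixes a b c d :: real
  shows "\<bar>a * b * c * d\<bar> \<le> (a^4 + b^4 + c^4 + d^4) / 4"
proof -
  define X where "X = a^2 + b^2"
  define Y where "Y = c^2 + d^2"
  have 1: "\<bar>a * b\<bar> \<le> X / 2" using amgm2[of "\<bar>a\<bar>" "\<bar>b\<bar>"] by (simp add: abs_mult X_def)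
  have 2: "\<bar>c * d\<bar> \<le> Y / 2" using amgm2[of "\<bar>c\<bar>" "\<bar>d\<bar>"] by (simp add: abs_mult Y_def)
  have "\<bar>a * b * c * d\<bar> = \<bar>a * b\<bar> * \<bar>c * d\<bar>" by (simp add: abs_mult)
  also have "\<dots> \<le> (X / 2) * (Y / 2)" using 1 2 by (intro mult_mono) auto
  also have "\<dots> \<le> (X^2 + Y^2) / 8" using amgm2[of X Y] by simp
  also have "X^2 \<le> 2 * (a^4 + b^4)" using amgm2[of "a^2" "b^2"]
    by (simp add: X_def power2_sum power_mult[symmetric])
  also have "Y^2 \<le> 2 * (c^4 + d^4)" using amgm2[of "c^2" "d^2"]
    by (simp add: Y_def power2_sum power_mult[symmetric])
  finally show ?thesis by simp
qed

locale nar = prob_space M for M :: "'a measure" +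
  fixes n :: nat and U :: "nat \<Rightarrow> 'a \<Rightarrow> real" and K :: real
  assumes ind: "indep_vars (\<lambda>_. borel) U {..<n}"
    and U4: "\<forall>i<n. integrable M (\<lambda>x. U i x ^ 4)"
    and mean0: "\<forall>i<n. expectation (U i) = 0"
    and mom: "\<forall>i<n. expectation (\<lambda>x. \<bar>U i x\<bar> ^ 4) powr (1/4) \<le> K"
begin

definition "Q = 1 + K ^ 4"

lemma Q_ge1: "1 \<le> Q" by (simp add: Q_def)

lemma Umeas[measurable]: "i < n \<Longrightarrow> U i \<in> borel_measurable M"
  using ind unfolding indep_vars_def by auto

lemma U4_le: assumes "i < n" shows "expectation (\<lambda>x. U i x ^ 4) \<le> K ^ 4"
proof -
  have e: "(\<lambda>x. \<bar>U i x\<bar> ^ 4) = (\<lambda>x. U i x ^ 4)" by (simp add: power_even_abs)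
  define z where "z = expectation (\<lambda>x. U i x ^ 4)"
  have z0: "0 \<le> z" unfolding z_def by (intro integral_nonneg_AE) auto
  have "z powr (1/4) \<le> K" using mom assms e z_def by simp
  moreover have "0 \<le> z powr (1/4)" by simp
  ultimately have "(z powr (1/4)) ^ 4 \<le> K ^ 4" by (intro power_mono)
  moreover have "(z powr (1/4)) ^ 4 = z"
  proof -
    have "(z powr (1/4)) ^ 4 = (z powr (1/4)) powr 4" by (subst powr_numeral) auto
    also have "\<dots> = z powr 1" by (simp add: powr_powr)
    also have "\<dots> = z" using z0 by simp
    finally show ?thesis .
  qed
  ultimately show ?thesis unfolding z_def by simp
qed

definition ok :: "('a \<Rightarrow> real) \<Rightarrow> bool" where
  "ok f \<longleftrightarrow> (\<exists>i<n. f = U i) \<or> f = (\<lambda>_. 1)"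

lemma ok_U: "i < n \<Longrightarrow> ok (U i)" and ok_1: "ok (\<lambda>_. 1)" by (auto simp: ok_def)

lemma ok_props: assumes "ok f"
  shows "f \<in> borel_measurable M" "integrable M (\<lambda>x. f x ^ 4)" "expectation (\<lambda>x. f x ^ 4) \<le> Q"
proof -
  show "f \<in> borel_measurable M" "integrable M (\<lambda>x. f x ^ 4)"
    using assms U4 unfolding ok_def by auto
  show "expectation (\<lambda>x. f x ^ 4) \<le> Q"
  proof (cases "f = (\<lambda>_. 1)")
    case True then show ?thesis by (simp add: prob_space Q_def)
  next
    case False
    then obtain i where i: "i < n" "f = U i" using assms unfolding ok_def by blast
    have "expectation (\<lambda>x. f x ^ 4) \<le> K ^ 4" using U4_le i by simp
    then show ?thesis unfolding Q_def by simp
  qed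
qed

lemma int4: assumes "ok f1" "ok f2" "ok f3" "ok f4"
  shows "integrable M (\<lambda>x. f1 x * f2 x * f3 x * f4 x)"
    and "expectation (\<lambda>x. \<bar>f1 x * f2 x * f3 x * f4 x\<bar>) \<le> Q"
proof -
  note p1 = ok_props[OF assms(1)] and p2 = ok_props[OF assms(2)]
    and p3 = ok_props[OF assms(3)] and p4 = ok_props[OF assms(4)]
  let ?g = "\<lambda>x. (f1 x ^ 4 + f2 x ^ 4 + f3 x ^ 4 + f4 x ^ 4) / 4"
  have ig: "integrable M ?g" using p1 p2 p3 p4 by auto
  have bd: "\<bar>f1 x * f2 x * f3 x * f4 x\<bar> \<le> ?g x" for x by (rule amgm4)
  show i: "integrable M (\<lambda>x. f1 x * f2 x * f3 x * f4 x)"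
    using p1 p2 p3 p4 bd by (intro Bochner_Integration.integrable_bound[OF ig]) (auto intro!: AE_I2 order_trans[OF _ abs_ge_self])
  have "expectation (\<lambda>x. \<bar>f1 x * f2 x * f3 x * f4 x\<bar>) \<le> expectation ?g"
    using i ig bd by (intro integral_mono) auto
  also have "\<dots> = (expectation (\<lambda>x. f1 x ^ 4) + expectation (\<lambda>x. f2 x ^ 4) + expectation (\<lambda>x. f3 x ^ 4) + expectation (\<lambda>x. f4 x ^ 4)) / 4"
    using p1 p2 p3 p4 by simp
  also have "\<dots> \<le> Q" using p1 p2 p3 p4 by simp
  finally show "expectation (\<lambda>x. \<bar>f1 x * f2 x * f3 x * f4 x\<bar>) \<le> Q" .
qed

lemma indep_split:
  fixes f :: "real \<Rightarrow> real" and g :: "(nat \<Rightarrow> real) \<Rightarrow> real"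
  assumes a: "a < n" and L: "L = {..<n} - {a}"
    and f[measurable]: "f \<in> borel_measurable borel"
    and g: "g \<in> borel_measurable (PiM L (\<lambda>_. borel))"
    and if1: "integrable M (\<lambda>x. f (U a x))"
    and ig: "integrable M (\<lambda>x. g (restrict (\<lambda>b. U b x) L))"
  shows "expectation (\<lambda>x. f (U a x) * g (restrict (\<lambda>b. U b x) L)) =
         expectation (\<lambda>x. f (U a x)) * expectation (\<lambda>x. g (restrict (\<lambda>b. U b x) L))"
proof -
  have iv: "indep_var (PiM {a} (\<lambda>_. borel)) (\<lambda>\<omega>. restrict (\<lambda>i. U i \<omega>) {a})
                      (PiM L (\<lambda>_. borel)) (\<lambda>\<omega>. restrict (\<lambda>i. U i \<omega>) L)"
    using a L by (intro indep_var_restrict[OF ind]) auto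
  have "(\<lambda>\<omega>. \<omega> a) \<in> measurable (PiM {a} (\<lambda>_. borel)) borel"
    by (rule measurable_component_singleton) simp
  from measurable_compose[OF this f]
  have m1: "(\<lambda>\<omega>. f (\<omega> a)) \<in> borel_measurable (PiM {a} (\<lambda>_. borel))" .
  have iv2: "indep_var borel ((\<lambda>\<omega>. f (\<omega> a)) \<circ> (\<lambda>\<omega>. restrict (\<lambda>i. U i \<omega>) {a}))
                       borel (g \<circ> (\<lambda>\<omega>. restrict (\<lambda>i. U i \<omega>) L))"
    by (rule indep_var_compose[OF iv m1 g])
  have e1: "((\<lambda>\<omega>. f (\<omega> a)) \<circ> (\<lambda>\<omega>. restrict (\<lambda>i. U i \<omega>) {a})) = (\<lambda>x. f (U a x))"
    by (auto simp: comp_def)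
  have e2: "(g \<circ> (\<lambda>\<omega>. restrict (\<lambda>i. U i \<omega>) L)) = (\<lambda>x. g (restrict (\<lambda>b. U b x) L))"
    by (auto simp: comp_def)
  show ?thesis using iv2 if1 ig unfolding e1 e2 by (rule indep_var_lebesgue_integral)
qed

lemma comp_meas: "b \<in> L \<Longrightarrow> (\<lambda>\<omega>. \<omega> b) \<in> borel_measurable (PiM L (\<lambda>_. borel :: real measure))"
  by (rule measurable_component_singleton)

lemma restrict_at: "b \<in> L \<Longrightarrow> restrict h L b = h b" by simp

lemma E_zero:
  assumes a: "a < n" and g: "g \<in> borel_measurable (PiM ({..<n} - {a}) (\<lambda>_. borel))"
    and ia: "integrable M (U a)"
    and ig: "integrable M (\<lambda>x. g (restrict (\<lambda>b. U b x) ({..<n} - {a})))"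
  shows "expectation (\<lambda>x. U a x * g (restrict (\<lambda>b. U b x) ({..<n} - {a}))) = 0"
proof -
  have f: "(\<lambda>y::real. y) \<in> borel_measurable borel" by simp
  have "expectation (\<lambda>x. U a x * g (restrict (\<lambda>b. U b x) ({..<n} - {a}))) =
    expectation (\<lambda>x. U a x) * expectation (\<lambda>x. g (restrict (\<lambda>b. U b x) ({..<n} - {a})))"
    by (rule indep_split[OF a refl f g _ ig]) (use ia in simp)
  then show ?thesis using mean0 a by simp
qed

lemma int1: "a < n \<Longrightarrow> integrable M (U a)"
  using int4(1)[OF ok_U ok_1 ok_1 ok_1, of a] by simp
lemma int2: "a < n \<Longrightarrow> b < n \<Longrightarrow> integrable M (\<lambda>x. U a x * U b x)"
  using int4(1)[OF ok_U ok_U ok_1 ok_1, of a b] by simp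
lemma int3: "a < n \<Longrightarrow> b < n \<Longrightarrow> c < n \<Longrightarrow> integrable M (\<lambda>x. U a x * U b x * U c x)"
  using int4(1)[OF ok_U ok_U ok_U ok_1, of a b c] by simp
lemma int4': "a < n \<Longrightarrow> b < n \<Longrightarrow> c < n \<Longrightarrow> d < n \<Longrightarrow> integrable M (\<lambda>x. U a x * U b x * U c x * U d x)"
  using int4(1)[OF ok_U ok_U ok_U ok_U, of a b c d] by simp

lemma bnd2: "a < n \<Longrightarrow> b < n \<Longrightarrow> \<bar>expectation (\<lambda>x. U a x * U b x)\<bar> \<le> Q"
  using order_trans[OF integral_abs_bound int4(2)[OF ok_U ok_U ok_1 ok_1, of a b]] by simp
lemma bnd3: "a < n \<Longrightarrow> b < n \<Longrightarrow> c < n \<Longrightarrow> \<bar>expectation (\<lambda>x. U a x * U b x * U c x)\<bar> \<le> Q"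
  using order_trans[OF integral_abs_bound int4(2)[OF ok_U ok_U ok_U ok_1, of a b c]] by simp
lemma bnd4: "a < n \<Longrightarrow> b < n \<Longrightarrow> c < n \<Longrightarrow> d < n \<Longrightarrow> \<bar>expectation (\<lambda>x. U a x * U b x * U c x * U d x)\<bar> \<le> Q"
  using order_trans[OF integral_abs_bound int4(2)[OF ok_U ok_U ok_U ok_U, of a b c d]] by simp

lemma E2_zero: assumes "a < n" "b < n" "a \<noteq> b" shows "expectation (\<lambda>x. U a x * U b x) = 0"
proof -
  let ?L = "{..<n} - {a}"
  have bL: "b \<in> ?L" using assms by auto
  have g: "(\<lambda>\<omega>::nat\<Rightarrow>real. \<omega> b) \<in> borel_measurable (PiM ?L (\<lambda>_. borel))"
    using bL by (rule measurable_component_singleton)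
  have e: "(\<lambda>x. (\<lambda>\<omega>. \<omega> b) (restrict (\<lambda>b. U b x) ?L)) = U b" using bL by auto
  show ?thesis using E_zero[OF assms(1) g] int1 assms unfolding e by simp
qed

lemma E3_zero: assumes "a < n" "b < n" "c < n" "a \<noteq> b" "a \<noteq> c"
  shows "expectation (\<lambda>x. U a x * U b x * U c x) = 0"
proof -
  let ?L = "{..<n} - {a}"
  have bL: "b \<in> ?L" "c \<in> ?L" using assms by auto
  have g: "(\<lambda>\<omega>::nat\<Rightarrow>real. \<omega> b * \<omega> c) \<in> borel_measurable (PiM ?L (\<lambda>_. borel))"
    using bL by (intro borel_measurable_times comp_meas) auto
  have e: "(\<lambda>x. (\<lambda>\<omega>. \<omega> b * \<omega> c) (restrict (\<lambda>b. U b x) ?L)) = (\<lambda>x. U b x * U c x)" using bL by auto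
  show ?thesis using E_zero[OF assms(1) g] int1 int2 assms unfolding e by (simp add: mult.assoc)
qed

lemma E4_zero: assumes "a < n" "b < n" "c < n" "d < n" "a \<noteq> b" "a \<noteq> c" "a \<noteq> d"
  shows "expectation (\<lambda>x. U a x * U b x * U c x * U d x) = 0"
proof -
  let ?L = "{..<n} - {a}"
  have bL: "b \<in> ?L" "c \<in> ?L" "d \<in> ?L" using assms by auto
  have g: "(\<lambda>\<omega>::nat\<Rightarrow>real. \<omega> b * \<omega> c * \<omega> d) \<in> borel_measurable (PiM ?L (\<lambda>_. borel))"
    using bL by (intro borel_measurable_times comp_meas) auto
  have e: "(\<lambda>x. (\<lambda>\<omega>. \<omega> b * \<omega> c * \<omega> d) (restrict (\<lambda>b. U b x) ?L)) = (\<lambda>x. U b x * U c x * U d x)" using bL by auto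
  show ?thesis using E_zero[OF assms(1) g] int1 int3 assms unfolding e by (simp add: mult.assoc)
qed

lemma E22: assumes "a < n" "c < n" "a \<noteq> c"
  shows "expectation (\<lambda>x. U a x * U a x * U c x * U c x) =
         expectation (\<lambda>x. U a x * U a x) * expectation (\<lambda>x. U c x * U c x)"
proof -
  let ?L = "{..<n} - {a}"
  have cL: "c \<in> ?L" using assms by auto
  have g: "(\<lambda>\<omega>::nat\<Rightarrow>real. \<omega> c * \<omega> c) \<in> borel_measurable (PiM ?L (\<lambda>_. borel))"
    using cL by (intro borel_measurable_times comp_meas) auto
  have e: "(\<lambda>x. (\<lambda>\<omega>. \<omega> c * \<omega> c) (restrict (\<lambda>b. U b x) ?L)) = (\<lambda>x. U c x * U c x)" using cL by auto
  have f: "(\<lambda>y::real. y * y) \<in> borel_measurable borel" by measurable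
  show ?thesis using indep_split[OF assms(1) refl f g] int2 assms unfolding e by (simp add: mult.assoc)
qed

end



context nar begin

lemma E3_bnd: assumes "a < n" "b < n" "c < n"
  shows "\<bar>expectation (\<lambda>x. U a x * U b x * U c x)\<bar> \<le> (if b = a \<and> c = a then Q else 0)"
proof (cases "b = a \<and> c = a")
  case True then show ?thesis using bnd3 assms by simp
next
  case False
  have "expectation (\<lambda>x. U a x * U b x * U c x) = 0"
  proof (cases "a \<noteq> b \<and> a \<noteq> c")
    case True then show ?thesis using E3_zero assms by blast
  next
    case F1: False
    show ?thesis
    proof (cases "b \<noteq> a \<and> b \<noteq> c")
      case True
      have "(\<lambda>x. U a x * U b x * U c x) = (\<lambda>x. U b x * U a x * U c x)" by (simp add: mult_ac)
      then show ?thesis using E3_zero[of b a c] True assms by simp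
    next
      case F2: False
      have "c \<noteq> a" "c \<noteq> b" using False F1 F2 by auto
      moreover have "(\<lambda>x. U a x * U b x * U c x) = (\<lambda>x. U c x * U a x * U b x)" by (simp add: mult_ac)
      ultimately show ?thesis using E3_zero[of c a b] assms by simp
    qed
  qed
  then show ?thesis using False Q_ge1 by simp
qed

definition "R = Q + Q^2"

lemma c4_bnd: assumes "a < n" "b < n" "c < n" "d < n"
  shows "\<bar>expectation (\<lambda>x. U a x * U b x * U c x * U d x) - expectation (\<lambda>x. U a x * U b x) * expectation (\<lambda>x. U c x * U d x)\<bar>
     \<le> (if c = a \<and> d = b then R else 0) + (if c = b \<and> d = a then R else 0)"
proof -
  let ?c = "expectation (\<lambda>x. U a x * U b x * U c x * U d x) - expectation (\<lambda>x. U a x * U b x) * expectation (\<lambda>x. U c x * U d x)"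
  have gen: "\<bar>?c\<bar> \<le> R"
  proof -
    have "\<bar>?c\<bar> \<le> \<bar>expectation (\<lambda>x. U a x * U b x * U c x * U d x)\<bar> + \<bar>expectation (\<lambda>x. U a x * U b x)\<bar> * \<bar>expectation (\<lambda>x. U c x * U d x)\<bar>"
      by (simp add: abs_mult[symmetric] abs_triangle_ineq4)
    also have "\<dots> \<le> Q + Q * Q" using bnd4 bnd2 assms Q_ge1
      by (intro add_mono mult_mono) auto
    finally show ?thesis by (simp add: R_def power2_eq_square)
  qed
  have R0: "0 \<le> R" using Q_ge1 by (simp add: R_def)
  show ?thesis
  proof (cases "(c = a \<and> d = b) \<or> (c = b \<and> d = a)")
    case True
    have "R \<le> (if c = a \<and> d = b then R else 0) + (if c = b \<and> d = a then R else 0)"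
      using True R0 by (cases "c = a \<and> d = b") auto
    then show ?thesis using gen by linarith
  next
    case False
    have z: "?c = 0"
    proof (cases "a \<noteq> b \<and> a \<noteq> c \<and> a \<noteq> d")
      case True then show ?thesis using E4_zero[of a b c d] E2_zero[of a b] assms by simp
    next
      case F1: False
      show ?thesis
      proof (cases "b \<noteq> a \<and> b \<noteq> c \<and> b \<noteq> d")
        case True
        have "(\<lambda>x. U a x * U b x * U c x * U d x) = (\<lambda>x. U b x * U a x * U c x * U d x)" by (simp add: mult_ac)
        moreover have "(\<lambda>x. U a x * U b x) = (\<lambda>x. U b x * U a x)" by (simp add: mult_ac)
        ultimately show ?thesis using E4_zero[of b a c d] E2_zero[of b a] True assms by simp
      next
        case F2: False
        show ?thesis
        proof (cases "c \<noteq> a \<and> c \<noteq> b \<and> c \<noteq> d")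
          case True
          have "(\<lambda>x. U a x * U b x * U c x * U d x) = (\<lambda>x. U c x * U a x * U b x * U d x)" by (simp add: mult_ac)
          then show ?thesis using E4_zero[of c a b d] E2_zero[of c d] True assms by simp
        next
          case F3: False
          show ?thesis
          proof (cases "d \<noteq> a \<and> d \<noteq> b \<and> d \<noteq> c")
            case True
            have "(\<lambda>x. U a x * U b x * U c x * U d x) = (\<lambda>x. U d x * U a x * U b x * U c x)" by (simp add: mult_ac)
            moreover have "(\<lambda>x. U c x * U d x) = (\<lambda>x. U d x * U c x)" by (simp add: mult_ac)
            ultimately show ?thesis using E4_zero[of d a b c] E2_zero[of d c] True assms by simp
          next
            case F4: False
            have "a = b" "c = d" "a \<noteq> c" using F1 F2 F3 F4 False by auto
            then show ?thesis using E22[of a c] assms by simp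
          qed
        qed
      qed
    qed
    have "(if c = a \<and> d = b then R else 0) = 0" "(if c = b \<and> d = a then R else 0) = 0"
      using False by auto
    then show ?thesis using z by simp
  qed
qed

end

locale full = nar M n U K + mx n A W \<tau>
  for M :: "'a measure" and n U K A W \<tau> +
  fixes \<epsilon> :: "nat \<Rightarrow> 'a \<Rightarrow> real"
  assumes eq: "\<forall>x\<in>space M. \<forall>i<n. \<epsilon> i x = (\<Sum>j<n. W i j * \<epsilon> j x) + U i x"
begin

lemma eps_repr: "x \<in> space M \<Longrightarrow> i < n \<Longrightarrow> \<epsilon> i x = (\<Sum>a<n. B i a * U a x)"
  using B_repr[of "\<lambda>j. \<epsilon> j x" "\<lambda>j. U j x" i] eq by auto

definition "G = 2 / (1 - \<tau>)^2"
definition "C0 = 1 / (1 - \<tau>)"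

lemma C0_ge: "0 \<le> C0" using tau1 by (simp add: C0_def)
lemma G_ge: "0 \<le> G" by (simp add: G_def)

lemma epow_le1: "epow (sqrt \<tau>) e \<le> 1"
  using tau0 tau1 by (cases e) (auto simp: epow_def power_le_one real_sqrt_le_1_iff)
lemma epow_ge0: "0 \<le> epow (sqrt \<tau>) e"
  using tau0 by (cases e) (auto simp: epow_def)
lemma epow_anti: "e1 \<le> e2 \<Longrightarrow> epow (sqrt \<tau>) e2 \<le> epow (sqrt \<tau>) e1"
  using tau0 tau1
  by (cases e1; cases e2) (auto simp: epow_def real_sqrt_le_1_iff intro!: power_decreasing)

lemma pairG: "i < n \<Longrightarrow> j < n \<Longrightarrow> (\<Sum>a<n. \<bar>B i a\<bar> * \<bar>B j a\<bar>) \<le> G * epow (sqrt \<tau>) (d i j)"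
  using pair unfolding G_def by simp

lemma int_lin: fixes f :: "nat \<Rightarrow> 'a \<Rightarrow> real" assumes "\<And>a. a \<in> S1 \<Longrightarrow> integrable M (f a)"
  shows "expectation (\<lambda>x. \<Sum>a\<in>S1. c a * f a x) = (\<Sum>a\<in>S1. c a * expectation (f a))"
proof -
  have "expectation (\<lambda>x. \<Sum>a\<in>S1. c a * f a x) = (\<Sum>a\<in>S1. expectation (\<lambda>x. c a * f a x))"
    using assms by (intro Bochner_Integration.integral_sum) auto
  then show ?thesis by simp
qed

lemma int_lin2: fixes f :: "nat \<Rightarrow> nat \<Rightarrow> 'a \<Rightarrow> real" assumes "\<And>a b. a \<in> S1 \<Longrightarrow> b \<in> S2 \<Longrightarrow> integrable M (f a b)"
  shows "expectation (\<lambda>x. \<Sum>a\<in>S1. \<Sum>b\<in>S2. c a b * f a b x) = (\<Sum>a\<in>S1. \<Sum>b\<in>S2. c a b * expectation (f a b))"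
proof -
  have "expectation (\<lambda>x. \<Sum>a\<in>S1. 1 * (\<Sum>b\<in>S2. c a b * f a b x)) = (\<Sum>a\<in>S1. 1 * expectation (\<lambda>x. \<Sum>b\<in>S2. c a b * f a b x))"
    using assms by (intro int_lin) auto
  also have "\<dots> = (\<Sum>a\<in>S1. \<Sum>b\<in>S2. c a b * expectation (f a b))"
    using assms by (intro sum.cong refl) (simp add: int_lin)
  finally show ?thesis by simp
qed

lemma int_lin3: fixes f :: "nat \<Rightarrow> nat \<Rightarrow> nat \<Rightarrow> 'a \<Rightarrow> real" assumes "\<And>a b e. a \<in> S1 \<Longrightarrow> b \<in> S2 \<Longrightarrow> e \<in> S3 \<Longrightarrow> integrable M (f a b e)"
  shows "expectation (\<lambda>x. \<Sum>a\<in>S1. \<Sum>b\<in>S2. \<Sum>e\<in>S3. c a b e * f a b e x) = (\<Sum>a\<in>S1. \<Sum>b\<in>S2. \<Sum>e\<in>S3. c a b e * expectation (f a b e))"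
proof -
  have "expectation (\<lambda>x. \<Sum>a\<in>S1. 1 * (\<Sum>b\<in>S2. \<Sum>e\<in>S3. c a b e * f a b e x)) = (\<Sum>a\<in>S1. 1 * expectation (\<lambda>x. \<Sum>b\<in>S2. \<Sum>e\<in>S3. c a b e * f a b e x))"
    using assms by (intro int_lin) auto
  also have "\<dots> = (\<Sum>a\<in>S1. \<Sum>b\<in>S2. \<Sum>e\<in>S3. c a b e * expectation (f a b e))"
    using assms by (intro sum.cong refl) (simp add: int_lin2)
  finally show ?thesis by simp
qed

lemma int_lin4: fixes f :: "nat \<Rightarrow> nat \<Rightarrow> nat \<Rightarrow> nat \<Rightarrow> 'a \<Rightarrow> real" assumes "\<And>a b e g. a \<in> S1 \<Longrightarrow> b \<in> S2 \<Longrightarrow> e \<in> S3 \<Longrightarrow> g \<in> S4 \<Longrightarrow> integrable M (f a b e g)"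
  shows "expectation (\<lambda>x. \<Sum>a\<in>S1. \<Sum>b\<in>S2. \<Sum>e\<in>S3. \<Sum>g\<in>S4. c a b e g * f a b e g x) = (\<Sum>a\<in>S1. \<Sum>b\<in>S2. \<Sum>e\<in>S3. \<Sum>g\<in>S4. c a b e g * expectation (f a b e g))"
proof -
  have "expectation (\<lambda>x. \<Sum>a\<in>S1. 1 * (\<Sum>b\<in>S2. \<Sum>e\<in>S3. \<Sum>g\<in>S4. c a b e g * f a b e g x)) = (\<Sum>a\<in>S1. 1 * expectation (\<lambda>x. \<Sum>b\<in>S2. \<Sum>e\<in>S3. \<Sum>g\<in>S4. c a b e g * f a b e g x))"
    using assms by (intro int_lin) auto
  also have "\<dots> = (\<Sum>a\<in>S1. \<Sum>b\<in>S2. \<Sum>e\<in>S3. \<Sum>g\<in>S4. c a b e g * expectation (f a b e g))"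
    using assms by (intro sum.cong refl) (simp add: int_lin3)
  finally show ?thesis by simp
qed

lemma E_eps2: assumes "i < n" "j < n"
  shows "expectation (\<lambda>x. \<epsilon> i x * \<epsilon> j x) =
    (\<Sum>a<n. \<Sum>b<n. B i a * B j b * expectation (\<lambda>x. U a x * U b x))"
proof -
  have "expectation (\<lambda>x. \<epsilon> i x * \<epsilon> j x) =
      expectation (\<lambda>x. \<Sum>a<n. \<Sum>b<n. B i a * B j b * (U a x * U b x))"
  proof (rule Bochner_Integration.integral_cong[OF refl])
    fix x assume x: "x \<in> space M"
    have "\<epsilon> i x * \<epsilon> j x = (\<Sum>a<n. B i a * U a x) * (\<Sum>b<n. B j b * U b x)"
      using eps_repr[OF x] assms by simp
    also have "\<dots> = (\<Sum>a<n. \<Sum>b<n. B i a * U a x * (B j b * U b x))" by (rule sum_product)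
    also have "\<dots> = (\<Sum>a<n. \<Sum>b<n. B i a * B j b * (U a x * U b x))"
      by (intro sum.cong refl) (simp add: mult_ac)
    finally show "\<epsilon> i x * \<epsilon> j x = (\<Sum>a<n. \<Sum>b<n. B i a * B j b * (U a x * U b x))" .
  qed
  also have "\<dots> = (\<Sum>a<n. \<Sum>b<n. B i a * B j b * expectation (\<lambda>x. U a x * U b x))"
    by (rule int_lin2[where f="\<lambda>a b x. U a x * U b x"]) (auto intro: int2)
  finally show ?thesis .
qed

lemma E_eps3: assumes "i < n" "j < n"
  shows "expectation (\<lambda>x. \<epsilon> i x * \<epsilon> j x ^ 2) =
    (\<Sum>a<n. \<Sum>b<n. \<Sum>c<n. B i a * B j b * B j c * expectation (\<lambda>x. U a x * U b x * U c x))"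
proof -
  have "expectation (\<lambda>x. \<epsilon> i x * \<epsilon> j x ^ 2) =
      expectation (\<lambda>x. \<Sum>a<n. \<Sum>b<n. \<Sum>c<n. B i a * B j b * B j c * (U a x * U b x * U c x))"
  proof (rule Bochner_Integration.integral_cong[OF refl])
    fix x assume x: "x \<in> space M"
    have "\<epsilon> i x * \<epsilon> j x ^ 2 = (\<Sum>a<n. B i a * U a x) * ((\<Sum>b<n. B j b * U b x) * (\<Sum>c<n. B j c * U c x))"
      using eps_repr[OF x] assms by (simp add: power2_eq_square)
    also have "\<dots> = (\<Sum>a<n. B i a * U a x) * (\<Sum>b<n. \<Sum>c<n. B j b * U b x * (B j c * U c x))"
      by (simp only: sum_product)
    also have "\<dots> = (\<Sum>a<n. \<Sum>b<n. \<Sum>c<n. B i a * U a x * (B j b * U b x * (B j c * U c x)))"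
      by (subst sum_distrib_right) (simp only: sum_distrib_left)
    also have "\<dots> = (\<Sum>a<n. \<Sum>b<n. \<Sum>c<n. B i a * B j b * B j c * (U a x * U b x * U c x))"
      by (intro sum.cong refl) (simp add: mult_ac)
    finally show "\<epsilon> i x * \<epsilon> j x ^ 2 = (\<Sum>a<n. \<Sum>b<n. \<Sum>c<n. B i a * B j b * B j c * (U a x * U b x * U c x))" .
  qed
  also have "\<dots> = (\<Sum>a<n. \<Sum>b<n. \<Sum>c<n. B i a * B j b * B j c * expectation (\<lambda>x. U a x * U b x * U c x))"
    by (rule int_lin3[where f="\<lambda>a b c x. U a x * U b x * U c x"]) (auto intro: int3)
  finally show ?thesis .
qed

lemma sum1_delta: "a < n \<Longrightarrow> (\<Sum>c<n. if c = a then v c else 0) = (v a :: real)"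
  by simp

lemma sum2_delta: assumes "a < n" "b < n"
  shows "(\<Sum>c<n. \<Sum>e<n. if c = a \<and> e = b then v c e else 0) = (v a b :: real)"
proof -
  have "(\<Sum>e<n. if c = a \<and> e = b then v c e else 0) = (if c = a then v c b else 0)" for c
    using assms by (cases "c = a") auto
  then show ?thesis using assms by simp
qed

lemma abs_sum2: "\<bar>\<Sum>a\<in>S1. \<Sum>b\<in>S2. (f a b :: real)\<bar> \<le> (\<Sum>a\<in>S1. \<Sum>b\<in>S2. \<bar>f a b\<bar>)"
  by (rule order_trans[OF sum_abs]) (intro sum_mono sum_abs)

lemma abs_sum3: "\<bar>\<Sum>a\<in>S1. \<Sum>b\<in>S2. \<Sum>c\<in>S3. (f a b c :: real)\<bar> \<le> (\<Sum>a\<in>S1. \<Sum>b\<in>S2. \<Sum>c\<in>S3. \<bar>f a b c\<bar>)"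
  by (rule order_trans[OF sum_abs]) (intro sum_mono abs_sum2)

lemma abs_sum4: "\<bar>\<Sum>a\<in>S1. \<Sum>b\<in>S2. \<Sum>c\<in>S3. \<Sum>e\<in>S4. (f a b c e :: real)\<bar> \<le> (\<Sum>a\<in>S1. \<Sum>b\<in>S2. \<Sum>c\<in>S3. \<Sum>e\<in>S4. \<bar>f a b c e\<bar>)"
  by (rule order_trans[OF sum_abs]) (intro sum_mono abs_sum3)

lemma partA1: assumes i: "i < n" and j: "j < n"
  shows "\<bar>expectation (\<lambda>x. \<epsilon> i x * \<epsilon> j x)\<bar> \<le> Q * G * epow (sqrt \<tau>) (d i j)"
proof -
  have "\<bar>expectation (\<lambda>x. \<epsilon> i x * \<epsilon> j x)\<bar> \<le> (\<Sum>a<n. \<Sum>b<n. \<bar>B i a * B j b * expectation (\<lambda>x. U a x * U b x)\<bar>)"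
    unfolding E_eps2[OF i j] by (rule abs_sum2)
  also have "\<dots> \<le> (\<Sum>a<n. \<Sum>b<n. if b = a then \<bar>B i a\<bar> * \<bar>B j a\<bar> * Q else 0)"
  proof (intro sum_mono)
    fix a b assume "a \<in> {..<n}" "b \<in> {..<n}"
    then have ab: "a < n" "b < n" by auto
    show "\<bar>B i a * B j b * expectation (\<lambda>x. U a x * U b x)\<bar> \<le> (if b = a then \<bar>B i a\<bar> * \<bar>B j a\<bar> * Q else 0)"
    proof (cases "b = a")
      case True
      then show ?thesis using bnd2[OF ab] by (simp add: abs_mult mult_left_mono)
    next
      case False then show ?thesis using E2_zero[of a b] ab by simp
    qed
  qed
  also have "\<dots> = (\<Sum>a<n. \<bar>B i a\<bar> * \<bar>B j a\<bar> * Q)" by (intro sum.cong refl) simp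
  also have "\<dots> = (\<Sum>a<n. \<bar>B i a\<bar> * \<bar>B j a\<bar>) * Q" by (simp add: sum_distrib_right)
  also have "\<dots> \<le> (G * epow (sqrt \<tau>) (d i j)) * Q" using pairG[OF i j] Q_ge1 by (intro mult_right_mono) auto
  finally show ?thesis by (simp add: mult_ac)
qed

lemma partA2: assumes i: "i < n" and j: "j < n"
  shows "\<bar>expectation (\<lambda>x. \<epsilon> i x * \<epsilon> j x ^ 2)\<bar> \<le> Q * C0 * G * epow (sqrt \<tau>) (d i j)"
proof -
  have "\<bar>expectation (\<lambda>x. \<epsilon> i x * \<epsilon> j x ^ 2)\<bar> \<le> (\<Sum>a<n. \<Sum>b<n. \<Sum>c<n. \<bar>B i a * B j b * B j c * expectation (\<lambda>x. U a x * U b x * U c x)\<bar>)"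
    unfolding E_eps3[OF i j] by (rule abs_sum3)
  also have "\<dots> \<le> (\<Sum>a<n. \<Sum>b<n. \<Sum>c<n. if b = a \<and> c = a then \<bar>B i a\<bar> * \<bar>B j a\<bar> * (C0 * Q) else 0)"
  proof (intro sum_mono)
    fix a b c assume "a \<in> {..<n}" "b \<in> {..<n}" "c \<in> {..<n}"
    then have abc: "a < n" "b < n" "c < n" by auto
    have E: "\<bar>expectation (\<lambda>x. U a x * U b x * U c x)\<bar> \<le> (if b = a \<and> c = a then Q else 0)"
      by (rule E3_bnd[OF abc])
    show "\<bar>B i a * B j b * B j c * expectation (\<lambda>x. U a x * U b x * U c x)\<bar> \<le> (if b = a \<and> c = a then \<bar>B i a\<bar> * \<bar>B j a\<bar> * (C0 * Q) else 0)"
    proof (cases "b = a \<and> c = a")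
      case True
      have "\<bar>B i a * B j b * B j c * expectation (\<lambda>x. U a x * U b x * U c x)\<bar> = (\<bar>B i a\<bar> * \<bar>B j a\<bar>) * (\<bar>B j a\<bar> * \<bar>expectation (\<lambda>x. U a x * U b x * U c x)\<bar>)"
        using True by (simp add: abs_mult)
      also have "\<dots> \<le> (\<bar>B i a\<bar> * \<bar>B j a\<bar>) * (C0 * Q)"
        using B_entry[OF j abc(1)] E True C0_ge by (intro mult_left_mono mult_mono) (auto simp: C0_def)
      finally show ?thesis using True by simp
    next
      case False
      have "\<bar>expectation (\<lambda>x. U a x * U b x * U c x)\<bar> \<le> 0" using E unfolding if_not_P[OF False] .
      then have z: "expectation (\<lambda>x. U a x * U b x * U c x) = 0" by simp
      show ?thesis unfolding if_not_P[OF False] using z by simp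
    qed
  qed
  also have "\<dots> = (\<Sum>a<n. \<bar>B i a\<bar> * \<bar>B j a\<bar> * (C0 * Q))"
  proof (intro sum.cong refl)
    fix a assume "a \<in> {..<n}"
    then show "(\<Sum>b<n. \<Sum>c<n. if b = a \<and> c = a then \<bar>B i a\<bar> * \<bar>B j a\<bar> * (C0 * Q) else 0) = \<bar>B i a\<bar> * \<bar>B j a\<bar> * (C0 * Q)"
      using sum2_delta[of a a "\<lambda>_ _. \<bar>B i a\<bar> * \<bar>B j a\<bar> * (C0 * Q)"] by simp
  qed
  also have "\<dots> = (\<Sum>a<n. \<bar>B i a\<bar> * \<bar>B j a\<bar>) * (C0 * Q)" by (simp add: sum_distrib_right)
  also have "\<dots> \<le> (G * epow (sqrt \<tau>) (d i j)) * (C0 * Q)" using pairG[OF i j] Q_ge1 C0_ge by (intro mult_right_mono) auto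
  finally show ?thesis by (simp add: mult_ac)
qed

lemma sep2: "(\<Sum>a\<in>S1. \<Sum>b\<in>S2. f a * g b * (r::real)) = sum f S1 * sum g S2 * r"
proof -
  have "sum f S1 * sum g S2 * r = (\<Sum>a\<in>S1. f a * sum g S2 * r)" by (simp add: sum_distrib_right)
  also have "\<dots> = (\<Sum>a\<in>S1. \<Sum>b\<in>S2. f a * g b * r)"
    by (intro sum.cong refl) (simp add: sum_distrib_left sum_distrib_right mult.assoc)
  finally show ?thesis ..
qed

lemma prod_sums2: fixes X Y :: "nat \<Rightarrow> nat \<Rightarrow> real"
  shows "(\<Sum>a<n. \<Sum>b<n. X a b) * (\<Sum>c<n. \<Sum>e<n. Y c e) = (\<Sum>a<n. \<Sum>b<n. \<Sum>c<n. \<Sum>e<n. X a b * Y c e)"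
  by (simp only: sum_distrib_right) (simp only: sum_distrib_left)

lemma E_eps4: assumes "i < n" "j < n" "k < n" "l < n"
  shows "expectation (\<lambda>x. \<epsilon> i x * \<epsilon> j x * (\<epsilon> k x * \<epsilon> l x)) =
    (\<Sum>a<n. \<Sum>b<n. \<Sum>c<n. \<Sum>e<n. B i a * B j b * B k c * B l e * expectation (\<lambda>x. U a x * U b x * U c x * U e x))"
proof -
  have "expectation (\<lambda>x. \<epsilon> i x * \<epsilon> j x * (\<epsilon> k x * \<epsilon> l x)) =
      expectation (\<lambda>x. \<Sum>a<n. \<Sum>b<n. \<Sum>c<n. \<Sum>e<n. B i a * B j b * B k c * B l e * (U a x * U b x * U c x * U e x))"
  proof (rule Bochner_Integration.integral_cong[OF refl])
    fix x assume x: "x \<in> space M"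
    have "\<epsilon> i x * \<epsilon> j x * (\<epsilon> k x * \<epsilon> l x) = ((\<Sum>a<n. B i a * U a x) * (\<Sum>b<n. B j b * U b x)) * ((\<Sum>c<n. B k c * U c x) * (\<Sum>e<n. B l e * U e x))"
      using eps_repr[OF x] assms by simp
    also have "\<dots> = (\<Sum>a<n. \<Sum>b<n. B i a * U a x * (B j b * U b x)) * (\<Sum>c<n. \<Sum>e<n. B k c * U c x * (B l e * U e x))"
      by (simp only: sum_product)
    also have "\<dots> = (\<Sum>a<n. \<Sum>b<n. \<Sum>c<n. \<Sum>e<n. B i a * U a x * (B j b * U b x) * (B k c * U c x * (B l e * U e x)))"
      by (rule prod_sums2)
    also have "\<dots> = (\<Sum>a<n. \<Sum>b<n. \<Sum>c<n. \<Sum>e<n. B i a * B j b * B k c * B l e * (U a x * U b x * U c x * U e x))"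
      by (intro sum.cong refl) (simp add: mult_ac)
    finally show "\<epsilon> i x * \<epsilon> j x * (\<epsilon> k x * \<epsilon> l x) = (\<Sum>a<n. \<Sum>b<n. \<Sum>c<n. \<Sum>e<n. B i a * B j b * B k c * B l e * (U a x * U b x * U c x * U e x))" .
  qed
  also have "\<dots> = (\<Sum>a<n. \<Sum>b<n. \<Sum>c<n. \<Sum>e<n. B i a * B j b * B k c * B l e * expectation (\<lambda>x. U a x * U b x * U c x * U e x))"
    by (rule int_lin4[where f="\<lambda>a b c e x. U a x * U b x * U c x * U e x"]) (auto intro: int4')
  finally show ?thesis .
qed

lemma cov_eps: assumes "i < n" "j < n" "k < n" "l < n"
  shows "cov M (\<lambda>x. \<epsilon> i x * \<epsilon> j x) (\<lambda>x. \<epsilon> k x * \<epsilon> l x) =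
    (\<Sum>a<n. \<Sum>b<n. \<Sum>c<n. \<Sum>e<n. B i a * B j b * B k c * B l e *
       (expectation (\<lambda>x. U a x * U b x * U c x * U e x) - expectation (\<lambda>x. U a x * U b x) * expectation (\<lambda>x. U c x * U e x)))"
proof -
  have p: "expectation (\<lambda>x. \<epsilon> i x * \<epsilon> j x) * expectation (\<lambda>x. \<epsilon> k x * \<epsilon> l x) =
    (\<Sum>a<n. \<Sum>b<n. \<Sum>c<n. \<Sum>e<n. B i a * B j b * B k c * B l e * (expectation (\<lambda>x. U a x * U b x) * expectation (\<lambda>x. U c x * U e x)))"
    unfolding E_eps2[OF assms(1,2)] E_eps2[OF assms(3,4)] prod_sums2
    by (intro sum.cong refl) (simp add: mult_ac)
  show ?thesis unfolding cov_def E_eps4[OF assms] p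
    by (simp add: right_diff_distrib sum_subtractf)
qed

lemma setdist_le: "i \<in> S \<Longrightarrow> k \<in> T \<Longrightarrow> setdist D S T \<le> D i k"
  unfolding setdist_def by (rule Inf_lower) blast

lemma partB: assumes i: "i < n" and j: "j < n" and k: "k < n" and l: "l < n"
  shows "\<bar>cov M (\<lambda>x. \<epsilon> i x * \<epsilon> j x) (\<lambda>x. \<epsilon> k x * \<epsilon> l x)\<bar> \<le> 2 * R * G^2 * epow (sqrt \<tau>) (setdist d {i, j} {k, l})"
proof -
  let ?e = "epow (sqrt \<tau>) (setdist d {i, j} {k, l})"
  let ?c = "\<lambda>a b c e. expectation (\<lambda>x. U a x * U b x * U c x * U e x) - expectation (\<lambda>x. U a x * U b x) * expectation (\<lambda>x. U c x * U e x)"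
  have R0: "0 \<le> R" using Q_ge1 by (simp add: R_def)
  have "\<bar>cov M (\<lambda>x. \<epsilon> i x * \<epsilon> j x) (\<lambda>x. \<epsilon> k x * \<epsilon> l x)\<bar> \<le>
     (\<Sum>a<n. \<Sum>b<n. \<Sum>c<n. \<Sum>e<n. \<bar>B i a * B j b * B k c * B l e * ?c a b c e\<bar>)"
    unfolding cov_eps[OF assms] by (rule abs_sum4)
  also have "\<dots> \<le> (\<Sum>a<n. \<Sum>b<n. \<Sum>c<n. \<Sum>e<n.
       (if c = a \<and> e = b then \<bar>B i a\<bar> * \<bar>B k a\<bar> * (\<bar>B j b\<bar> * \<bar>B l b\<bar>) * R else 0) +
       (if c = b \<and> e = a then \<bar>B i a\<bar> * \<bar>B l a\<bar> * (\<bar>B j b\<bar> * \<bar>B k b\<bar>) * R else 0))"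
  proof (intro sum_mono)
    fix a b c e assume "a \<in> {..<n}" "b \<in> {..<n}" "c \<in> {..<n}" "e \<in> {..<n}"
    then have abce: "a < n" "b < n" "c < n" "e < n" by auto
    have cb: "\<bar>?c a b c e\<bar> \<le> (if c = a \<and> e = b then R else 0) + (if c = b \<and> e = a then R else 0)"
      by (rule c4_bnd[OF abce])
    have "\<bar>B i a * B j b * B k c * B l e * ?c a b c e\<bar> = \<bar>B i a * B j b * B k c * B l e\<bar> * \<bar>?c a b c e\<bar>"
      by (simp add: abs_mult)
    also have "\<dots> \<le> \<bar>B i a * B j b * B k c * B l e\<bar> * ((if c = a \<and> e = b then R else 0) + (if c = b \<and> e = a then R else 0))"
      using cb by (intro mult_left_mono) auto
    also have "\<dots> = (if c = a \<and> e = b then \<bar>B i a\<bar> * \<bar>B k a\<bar> * (\<bar>B j b\<bar> * \<bar>B l b\<bar>) * R else 0) +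
       (if c = b \<and> e = a then \<bar>B i a\<bar> * \<bar>B l a\<bar> * (\<bar>B j b\<bar> * \<bar>B k b\<bar>) * R else 0)"
    proof -
      have h1: "\<bar>B i a * B j b * B k c * B l e\<bar> * (if c = a \<and> e = b then R else 0) = (if c = a \<and> e = b then \<bar>B i a\<bar> * \<bar>B k a\<bar> * (\<bar>B j b\<bar> * \<bar>B l b\<bar>) * R else 0)"
      proof (cases "c = a \<and> e = b")
        case True then have "c = a" "e = b" by auto
        then show ?thesis by (simp add: abs_mult mult_ac)
      next
        case False then show ?thesis unfolding if_not_P[OF False] by simp
      qed
      have h2: "\<bar>B i a * B j b * B k c * B l e\<bar> * (if c = b \<and> e = a then R else 0) = (if c = b \<and> e = a then \<bar>B i a\<bar> * \<bar>B l a\<bar> * (\<bar>B j b\<bar> * \<bar>B k b\<bar>) * R else 0)"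
      proof (cases "c = b \<and> e = a")
        case True then have "c = b" "e = a" by auto
        then show ?thesis by (simp add: abs_mult mult_ac)
      next
        case False then show ?thesis unfolding if_not_P[OF False] by simp
      qed
      show ?thesis unfolding distrib_left h1 h2 ..
    qed
    finally show "\<bar>B i a * B j b * B k c * B l e * ?c a b c e\<bar> \<le> \<dots>" .
  qed
  also have "\<dots> = (\<Sum>a<n. \<Sum>b<n. \<bar>B i a\<bar> * \<bar>B k a\<bar> * (\<bar>B j b\<bar> * \<bar>B l b\<bar>) * R +
                                   \<bar>B i a\<bar> * \<bar>B l a\<bar> * (\<bar>B j b\<bar> * \<bar>B k b\<bar>) * R)"
  proof (intro sum.cong refl)
    fix a b assume "a \<in> {..<n}" "b \<in> {..<n}"
    then have ab: "a < n" "b < n" by auto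
    show "(\<Sum>c<n. \<Sum>e<n. (if c = a \<and> e = b then \<bar>B i a\<bar> * \<bar>B k a\<bar> * (\<bar>B j b\<bar> * \<bar>B l b\<bar>) * R else 0) +
       (if c = b \<and> e = a then \<bar>B i a\<bar> * \<bar>B l a\<bar> * (\<bar>B j b\<bar> * \<bar>B k b\<bar>) * R else 0)) =
       \<bar>B i a\<bar> * \<bar>B k a\<bar> * (\<bar>B j b\<bar> * \<bar>B l b\<bar>) * R + \<bar>B i a\<bar> * \<bar>B l a\<bar> * (\<bar>B j b\<bar> * \<bar>B k b\<bar>) * R"
      using sum2_delta[OF ab, of "\<lambda>_ _. \<bar>B i a\<bar> * \<bar>B k a\<bar> * (\<bar>B j b\<bar> * \<bar>B l b\<bar>) * R"]
        sum2_delta[OF ab(2,1), of "\<lambda>_ _. \<bar>B i a\<bar> * \<bar>B l a\<bar> * (\<bar>B j b\<bar> * \<bar>B k b\<bar>) * R"]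
      by (simp add: sum.distrib)
  qed
  also have "\<dots> = (\<Sum>a<n. \<bar>B i a\<bar> * \<bar>B k a\<bar>) * (\<Sum>b<n. \<bar>B j b\<bar> * \<bar>B l b\<bar>) * R +
                  (\<Sum>a<n. \<bar>B i a\<bar> * \<bar>B l a\<bar>) * (\<Sum>b<n. \<bar>B j b\<bar> * \<bar>B k b\<bar>) * R"
    by (simp only: sum.distrib sep2)
  also have "\<dots> \<le> (G * ?e) * G * R + (G * ?e) * G * R"
  proof -
    have e1: "epow (sqrt \<tau>) (d i k) \<le> ?e" by (rule epow_anti, rule setdist_le) auto
    have e2: "epow (sqrt \<tau>) (d i l) \<le> ?e" by (rule epow_anti, rule setdist_le) auto
    have s1: "(\<Sum>a<n. \<bar>B i a\<bar> * \<bar>B k a\<bar>) \<le> G * ?e"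
      using pairG[OF i k] e1 G_ge by (meson mult_left_mono order_trans)
    have s2: "(\<Sum>a<n. \<bar>B i a\<bar> * \<bar>B l a\<bar>) \<le> G * ?e"
      using pairG[OF i l] e2 G_ge by (meson mult_left_mono order_trans)
    have s3: "(\<Sum>b<n. \<bar>B j b\<bar> * \<bar>B l b\<bar>) \<le> G"
      using pairG[OF j l] epow_le1[of "d j l"] G_ge by (meson mult_left_le order_trans)
    have s4: "(\<Sum>b<n. \<bar>B j b\<bar> * \<bar>B k b\<bar>) \<le> G"
      using pairG[OF j k] epow_le1[of "d j k"] G_ge by (meson mult_left_le order_trans)
    have nn: "0 \<le> (\<Sum>b<n. \<bar>B j b\<bar> * \<bar>B l b\<bar>)" "0 \<le> (\<Sum>b<n. \<bar>B j b\<bar> * \<bar>B k b\<bar>)"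
      "0 \<le> G * ?e" using G_ge epow_ge0 by (auto intro!: sum_nonneg)
    show ?thesis using s1 s2 s3 s4 nn R0
      by (intro add_mono mult_right_mono mult_mono) auto
  qed
  also have "\<dots> = 2 * R * G^2 * ?e" by (simp add: power2_eq_square mult_ac)
  finally show ?thesis .
qed

lemma E_eps1: assumes "i < n" shows "expectation (\<epsilon> i) = 0"
proof -
  have "expectation (\<epsilon> i) = expectation (\<lambda>x. \<Sum>a<n. B i a * U a x)"
    using eps_repr assms by (intro Bochner_Integration.integral_cong) auto
  also have "\<dots> = (\<Sum>a<n. B i a * expectation (U a))"
    by (rule int_lin) (auto intro: int1)
  also have "\<dots> = 0" using mean0 by simp
  finally show ?thesis .
qed

lemma partC:
  fixes h h' :: "real \<Rightarrow> real"
  assumes hb: "\<forall>x. \<bar>h x\<bar> \<le> Bh" and hd: "\<forall>x. (h has_real_derivative h' x) (at x)"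
    and h'b: "\<forall>x. \<bar>h' x\<bar> \<le> Bh'" and i: "i < n" and V: "V \<subseteq> {..<n}"
  shows "\<bar>cov M (\<epsilon> i) (\<lambda>x. h (t * (\<Sum>k\<in>V. \<epsilon> k x)))\<bar>
     \<le> Bh' * Q * G * (\<bar>t\<bar> * real (card V)) * epow (sqrt \<tau>) (setdist d {i} V)"
proof -
  let ?e = "epow (sqrt \<tau>) (setdist d {i} V)"
  define Cc where "Cc a = (\<Sum>k\<in>V. B k a)" for a
  define H where "H x = h (t * (\<Sum>a<n. Cc a * U a x))" for x
  define Ha where "Ha a x = h (t * (\<Sum>b\<in>{..<n} - {a}. Cc b * U b x))" for a x
  have Bh0: "0 \<le> Bh" using hb[rule_format, of 0] by linarith
  have Bh'0: "0 \<le> Bh'" using h'b[rule_format, of 0] by linarith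
  have finV: "finite V" using V finite_subset by blast
  have hm[measurable]: "h \<in> borel_measurable borel"
    using hd by (intro borel_measurable_continuous_onI continuous_at_imp_continuous_on) (auto intro: DERIV_isCont)
  have Hm: "H \<in> borel_measurable M" unfolding H_def
    by (intro measurable_compose[OF _ hm] borel_measurable_times borel_measurable_const borel_measurable_sum Umeas) auto
  have Hb: "\<bar>H x\<bar> \<le> Bh" for x unfolding H_def using hb by auto
  have Hi: "integrable M H" using Hm Hb by (intro integrable_const_bound[of _ Bh]) auto
  have UHi: "integrable M (\<lambda>x. U a x * H x)" if a: "a < n" for a
  proof (rule Bochner_Integration.integrable_bound[OF integrable_mult_right[OF int1[OF a], of Bh]])
    show "(\<lambda>x. U a x * H x) \<in> borel_measurable M" using Hm Umeas[OF a] by (intro borel_measurable_times)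
    show "AE x in M. norm (U a x * H x) \<le> norm (Bh * U a x)"
    proof (intro AE_I2)
      fix x
      have "\<bar>U a x\<bar> * \<bar>H x\<bar> \<le> \<bar>U a x\<bar> * Bh" by (rule mult_left_mono) (use Hb in auto)
      then show "norm (U a x * H x) \<le> norm (Bh * U a x)" using Bh0 by (simp add: abs_mult mult.commute)
    qed
  qed
  have Sx: "t * (\<Sum>k\<in>V. \<epsilon> k x) = t * (\<Sum>a<n. Cc a * U a x)" if x: "x \<in> space M" for x
  proof -
    have "(\<Sum>k\<in>V. \<epsilon> k x) = (\<Sum>k\<in>V. \<Sum>a<n. B k a * U a x)"
      using eps_repr[OF x] V by (intro sum.cong refl) auto
    also have "\<dots> = (\<Sum>a<n. \<Sum>k\<in>V. B k a * U a x)" by (rule sum.swap)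
    also have "\<dots> = (\<Sum>a<n. Cc a * U a x)" unfolding Cc_def by (simp add: sum_distrib_right)
    finally show ?thesis by simp
  qed
  have covH: "cov M (\<epsilon> i) (\<lambda>x. h (t * (\<Sum>k\<in>V. \<epsilon> k x))) = (\<Sum>a<n. B i a * expectation (\<lambda>x. U a x * H x))"
  proof -
    have "expectation (\<lambda>x. \<epsilon> i x * h (t * (\<Sum>k\<in>V. \<epsilon> k x))) = expectation (\<lambda>x. \<Sum>a<n. B i a * (U a x * H x))"
    proof (rule Bochner_Integration.integral_cong[OF refl])
      fix x assume x: "x \<in> space M"
      show "\<epsilon> i x * h (t * (\<Sum>k\<in>V. \<epsilon> k x)) = (\<Sum>a<n. B i a * (U a x * H x))"
        unfolding Sx[OF x] eps_repr[OF x i] H_def by (simp add: sum_distrib_right mult.assoc)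
    qed
    also have "\<dots> = (\<Sum>a<n. B i a * expectation (\<lambda>x. U a x * H x))"
      by (rule int_lin) (auto intro: UHi)
    finally show ?thesis unfolding cov_def E_eps1[OF i] by simp
  qed
  have trm: "\<bar>expectation (\<lambda>x. U a x * H x)\<bar> \<le> Bh' * \<bar>t\<bar> * \<bar>Cc a\<bar> * Q" if a: "a < n" for a
  proof -
    let ?L = "{..<n} - {a}"
    define g where "g \<omega> = h (t * (\<Sum>b\<in>?L. Cc b * \<omega> b))" for \<omega> :: "nat \<Rightarrow> real"
    have gm: "g \<in> borel_measurable (PiM ?L (\<lambda>_. borel))" unfolding g_def
      by (intro measurable_compose[OF _ hm] borel_measurable_times borel_measurable_const borel_measurable_sum comp_meas) auto
    have ge: "(\<lambda>x. g (restrict (\<lambda>b. U b x) ?L)) = Ha a" unfolding g_def Ha_def by auto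
    have Ham: "Ha a \<in> borel_measurable M" unfolding Ha_def
      by (intro measurable_compose[OF _ hm] borel_measurable_times borel_measurable_const borel_measurable_sum Umeas) auto
    have Hab: "\<bar>Ha a x\<bar> \<le> Bh" for x unfolding Ha_def using hb by auto
    have Hai: "integrable M (Ha a)" using Ham Hab by (intro integrable_const_bound[of _ Bh]) auto
    have UHai: "integrable M (\<lambda>x. U a x * Ha a x)"
    proof (rule Bochner_Integration.integrable_bound[OF integrable_mult_right[OF int1[OF a], of Bh]])
      show "(\<lambda>x. U a x * Ha a x) \<in> borel_measurable M" using Ham Umeas[OF a] by (intro borel_measurable_times)
      show "AE x in M. norm (U a x * Ha a x) \<le> norm (Bh * U a x)"
      proof (intro AE_I2)
      fix x
      have "\<bar>U a x\<bar> * \<bar>Ha a x\<bar> \<le> \<bar>U a x\<bar> * Bh" by (rule mult_left_mono) (use Hab in auto)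
      then show "norm (U a x * Ha a x) \<le> norm (Bh * U a x)" using Bh0 by (simp add: abs_mult mult.commute)
    qed
    qed
    have ge': "g (restrict (\<lambda>b. U b x) ?L) = Ha a x" for x unfolding g_def Ha_def by auto
    have ig: "integrable M (\<lambda>x. g (restrict (\<lambda>b. U b x) ?L))" unfolding ge by (rule Hai)
    have "expectation (\<lambda>x. U a x * Ha a x) = expectation (\<lambda>x. U a x * g (restrict (\<lambda>b. U b x) ?L))"
      by (simp only: ge')
    also have "\<dots> = 0" by (rule E_zero[OF a gm int1[OF a] ig])
    finally have z: "expectation (\<lambda>x. U a x * Ha a x) = 0" .
    have splt: "(\<Sum>b<n. Cc b * U b x) = Cc a * U a x + (\<Sum>b\<in>?L. Cc b * U b x)" for x
      using a by (subst sum.remove[of "{..<n}" a]) auto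
    have pw: "\<bar>U a x * H x - U a x * Ha a x\<bar> \<le> Bh' * \<bar>t\<bar> * \<bar>Cc a\<bar> * (U a x * U a x)" for x
    proof -
      have "\<bar>H x - Ha a x\<bar> \<le> Bh' * \<bar>t * (\<Sum>b<n. Cc b * U b x) - t * (\<Sum>b\<in>?L. Cc b * U b x)\<bar>"
        unfolding H_def Ha_def by (rule lipschitz_deriv[OF hd h'b])
      also have "\<dots> = Bh' * (\<bar>t\<bar> * \<bar>Cc a\<bar> * \<bar>U a x\<bar>)"
        unfolding splt by (simp add: algebra_simps abs_mult)
      finally have "\<bar>H x - Ha a x\<bar> \<le> Bh' * (\<bar>t\<bar> * \<bar>Cc a\<bar> * \<bar>U a x\<bar>)" .
      then have "\<bar>U a x\<bar> * \<bar>H x - Ha a x\<bar> \<le> \<bar>U a x\<bar> * (Bh' * (\<bar>t\<bar> * \<bar>Cc a\<bar> * \<bar>U a x\<bar>))"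
        by (intro mult_left_mono) auto
      moreover have "\<bar>U a x * H x - U a x * Ha a x\<bar> = \<bar>U a x\<bar> * \<bar>H x - Ha a x\<bar>"
        by (simp add: abs_mult[symmetric] right_diff_distrib)
      moreover have "\<bar>U a x\<bar> * (Bh' * (\<bar>t\<bar> * \<bar>Cc a\<bar> * \<bar>U a x\<bar>)) = Bh' * \<bar>t\<bar> * \<bar>Cc a\<bar> * (\<bar>U a x\<bar> * \<bar>U a x\<bar>)"
        by (simp only: mult_ac)
      moreover have "\<bar>U a x\<bar> * \<bar>U a x\<bar> = U a x * U a x" by (rule abs_mult_self)
      ultimately show ?thesis by simp
    qed
    have "expectation (\<lambda>x. U a x * H x) = expectation (\<lambda>x. U a x * H x - U a x * Ha a x)"
      using UHi[OF a] UHai z by (simp add: Bochner_Integration.integral_diff)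
    also have "\<bar>\<dots>\<bar> \<le> expectation (\<lambda>x. \<bar>U a x * H x - U a x * Ha a x\<bar>)" by (rule integral_abs_bound)
    also have "\<dots> \<le> expectation (\<lambda>x. Bh' * \<bar>t\<bar> * \<bar>Cc a\<bar> * (U a x * U a x))"
      using UHi[OF a] UHai int2[OF a a] pw by (intro integral_mono) auto
    also have "\<dots> = Bh' * \<bar>t\<bar> * \<bar>Cc a\<bar> * expectation (\<lambda>x. U a x * U a x)" by simp
    also have "\<dots> \<le> Bh' * \<bar>t\<bar> * \<bar>Cc a\<bar> * Q"
      using bnd2[OF a a] Bh'0 by (intro mult_left_mono) auto
    finally show ?thesis .
  qed
  have "\<bar>cov M (\<epsilon> i) (\<lambda>x. h (t * (\<Sum>k\<in>V. \<epsilon> k x)))\<bar> \<le> (\<Sum>a<n. \<bar>B i a\<bar> * (Bh' * \<bar>t\<bar> * \<bar>Cc a\<bar> * Q))"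
    unfolding covH by (rule order_trans[OF sum_abs]) (auto simp: abs_mult intro!: sum_mono mult_left_mono trm)
  also have "\<dots> \<le> (\<Sum>a<n. \<Sum>k\<in>V. \<bar>B i a\<bar> * \<bar>B k a\<bar> * (Bh' * \<bar>t\<bar> * Q))"
  proof (intro sum_mono)
    fix a
    have "\<bar>Cc a\<bar> \<le> (\<Sum>k\<in>V. \<bar>B k a\<bar>)" unfolding Cc_def by (rule sum_abs)
    then have "\<bar>B i a\<bar> * (Bh' * \<bar>t\<bar> * \<bar>Cc a\<bar> * Q) \<le> \<bar>B i a\<bar> * (Bh' * \<bar>t\<bar> * (\<Sum>k\<in>V. \<bar>B k a\<bar>) * Q)"
      using Bh'0 Q_ge1 by (intro mult_left_mono mult_right_mono) auto
    also have "\<dots> = (\<Sum>k\<in>V. \<bar>B i a\<bar> * \<bar>B k a\<bar> * (Bh' * \<bar>t\<bar> * Q))"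
      by (simp add: sum_distrib_left sum_distrib_right mult_ac)
    finally show "\<bar>B i a\<bar> * (Bh' * \<bar>t\<bar> * \<bar>Cc a\<bar> * Q) \<le> (\<Sum>k\<in>V. \<bar>B i a\<bar> * \<bar>B k a\<bar> * (Bh' * \<bar>t\<bar> * Q))" .
  qed
  also have "\<dots> = (\<Sum>k\<in>V. (\<Sum>a<n. \<bar>B i a\<bar> * \<bar>B k a\<bar>) * (Bh' * \<bar>t\<bar> * Q))"
    by (subst sum.swap) (simp add: sum_distrib_right)
  also have "\<dots> \<le> (\<Sum>k\<in>V. (G * ?e) * (Bh' * \<bar>t\<bar> * Q))"
  proof (intro sum_mono mult_right_mono)
    fix k assume k: "k \<in> V"
    then have "k < n" using V by auto
    moreover have "epow (sqrt \<tau>) (d i k) \<le> ?e" using k by (intro epow_anti setdist_le) auto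
    ultimately show "(\<Sum>a<n. \<bar>B i a\<bar> * \<bar>B k a\<bar>) \<le> G * ?e"
      using pairG[OF i] G_ge by (meson mult_left_mono order_trans)
    show "0 \<le> Bh' * \<bar>t\<bar> * Q" using Bh'0 Q_ge1 by simp
  qed
  also have "\<dots> = Bh' * Q * G * (\<bar>t\<bar> * real (card V)) * ?e" by (simp add: mult_ac)
  finally show ?thesis .
qed

lemma main:
  fixes Bh Bh' :: real
  defines "cc \<equiv> 1 + (1 + K^4) * (2 / (1 - \<tau>)^2) + (1 + K^4) * (1 / (1 - \<tau>)) * (2 / (1 - \<tau>)^2)
      + 2 * ((1 + K^4) + (1 + K^4)^2) * (2 / (1 - \<tau>)^2)^2 + \<bar>Bh'\<bar> * (1 + K^4) * (2 / (1 - \<tau>)^2)"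
  shows "assumption2 M n d \<epsilon> (sqrt \<tau>) cc Bh Bh'"
proof -
  have Q0: "0 \<le> Q" using Q_ge1 by simp
  have R0: "0 \<le> R" using Q_ge1 by (simp add: R_def)
  have t1: "0 \<le> Q * G" "0 \<le> Q * C0 * G" "0 \<le> 2 * R * G^2" "0 \<le> \<bar>Bh'\<bar> * Q * G"
    using Q0 R0 G_ge C0_ge by auto
  have cc: "cc = 1 + Q * G + Q * C0 * G + 2 * R * G^2 + \<bar>Bh'\<bar> * Q * G"
    unfolding cc_def Q_def R_def G_def C0_def by simp
  have le: "T * e \<le> cc * e" if "T \<le> cc" "0 \<le> e" for T e using that by (intro mult_right_mono)
  have cA1: "Q * G \<le> cc" and cA2: "Q * C0 * G \<le> cc" and cB: "2 * R * G^2 \<le> cc"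
    and cC: "\<bar>Bh'\<bar> * Q * G \<le> cc"
    unfolding cc using t1 by linarith+
  show ?thesis unfolding assumption2_def
  proof (intro conjI allI impI ballI)
    fix i j l :: nat assume i: "i < n" and j: "j < n" and l: "l \<in> {1, 2}"
    show "\<bar>expectation (\<lambda>x. \<epsilon> i x * \<epsilon> j x ^ l)\<bar> \<le> cc * epow (sqrt \<tau>) (d i j)"
    proof (cases "l = 1")
      case True
      then show ?thesis using order_trans[OF partA1[OF i j] le[OF cA1 epow_ge0]] by simp
    next
      case False
      then have "l = 2" using l by auto
      then show ?thesis using order_trans[OF partA2[OF i j] le[OF cA2 epow_ge0]] by simp
    qed
  next
    fix i j k l assume "i < n" "j < n" "k < n" "l < n"
    then show "\<bar>cov M (\<lambda>x. \<epsilon> i x * \<epsilon> j x) (\<lambda>x. \<epsilon> k x * \<epsilon> l x)\<bar> \<le> cc * epow (sqrt \<tau>) (setdist d {i, j} {k, l})"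
      using partB le[OF cB epow_ge0] by (meson order_trans)
  next
    fix h :: "real \<Rightarrow> real" and h' t i V
    assume hb: "\<forall>x. \<bar>h x\<bar> \<le> Bh" and hd: "\<forall>x. (h has_real_derivative h' x) (at x)"
      and h'b: "\<forall>x. \<bar>h' x\<bar> \<le> Bh'" and i: "i < n" and V: "V \<subseteq> {..<n}"
    let ?e = "epow (sqrt \<tau>) (setdist d {i} V)"
    have "\<bar>cov M (\<epsilon> i) (\<lambda>x. h (t * (\<Sum>k\<in>V. \<epsilon> k x)))\<bar> \<le> Bh' * Q * G * (\<bar>t\<bar> * real (card V)) * ?e"
      by (rule partC[OF hb hd h'b i V])
    also have "\<dots> \<le> (\<bar>Bh'\<bar> * Q * G) * (1 + \<bar>t\<bar> * real (card V)) * ?e"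
      using t1 Q0 G_ge epow_ge0
      by (intro mult_right_mono mult_mono) auto
    also have "\<dots> \<le> cc * (1 + \<bar>t\<bar> * real (card V)) * ?e"
      using cC epow_ge0 by (intro mult_right_mono) auto
    finally show "\<bar>cov M (\<epsilon> i) (\<lambda>x. h (t * (\<Sum>k\<in>V. \<epsilon> k x)))\<bar> \<le> cc * (1 + \<bar>t\<bar> * real (card V)) * ?e" .
  qed
qed

end

theorem proposition1:
  fixes K \<tau> Bh Bh' :: real
  assumes "\<tau> < 1"
  shows "\<exists>c>0. \<forall>n (A :: nat \<Rightarrow> nat \<Rightarrow> bool) (W :: nat \<Rightarrow> nat \<Rightarrow> real) (M :: 'a measure)
            (U :: nat \<Rightarrow> 'a \<Rightarrow> real) (\<epsilon> :: nat \<Rightarrow> 'a \<Rightarrow> real).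
     1 \<le> n \<longrightarrow>
     (\<forall>i<n. \<forall>j<n. A i j = A j i) \<longrightarrow>
     Max ((\<lambda>i. \<Sum>j<n. \<bar>W i j\<bar>) ` {..<n}) = \<tau> \<longrightarrow>
     (\<forall>i<n. \<forall>j<n. \<not> A i j \<longrightarrow> W i j = 0) \<longrightarrow>
     prob_space M \<longrightarrow>
     prob_space.indep_vars M (\<lambda>_. borel) U {..<n} \<longrightarrow>
     (\<forall>i<n. integrable M (\<lambda>x. U i x ^ 4) \<and> prob_space.expectation M (U i) = 0 \<and>
            (prob_space.expectation M (\<lambda>x. \<bar>U i x\<bar> ^ 4)) powr (1/4) \<le> K) \<longrightarrow>
     (\<forall>x\<in>space M. \<forall>i<n. \<epsilon> i x = (\<Sum>j<n. W i j * \<epsilon> j x) + U i x) \<longrightarrow>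
     assumption2 M n (gdist A n) \<epsilon> (sqrt \<tau>) c Bh Bh'"
proof -
  define cc where "cc \<equiv> 1 + (1 + K^4) * (2 / (1 - \<tau>)^2) + (1 + K^4) * (1 / (1 - \<tau>)) * (2 / (1 - \<tau>)^2)
      + 2 * ((1 + K^4) + (1 + K^4)^2) * (2 / (1 - \<tau>)^2)^2 + \<bar>Bh'\<bar> * (1 + K^4) * (2 / (1 - \<tau>)^2)"
  have cpos: "0 < cc" unfolding cc_def using assms
    by (intro add_pos_nonneg) (auto intro!: mult_nonneg_nonneg add_nonneg_nonneg)
  show ?thesis
  proof (intro exI[of _ cc] conjI cpos allI impI)
    fix n :: nat and A :: "nat \<Rightarrow> nat \<Rightarrow> bool" and W :: "nat \<Rightarrow> nat \<Rightarrow> real"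
      and M :: "'a measure" and U \<epsilon> :: "nat \<Rightarrow> 'a \<Rightarrow> real"
    assume n: "1 \<le> n" and sym: "\<forall>i<n. \<forall>j<n. A i j = A j i"
      and mx: "Max ((\<lambda>i. \<Sum>j<n. \<bar>W i j\<bar>) ` {..<n}) = \<tau>"
      and supp: "\<forall>i<n. \<forall>j<n. \<not> A i j \<longrightarrow> W i j = 0"
      and ps: "prob_space M" and ind: "prob_space.indep_vars M (\<lambda>_. borel) U {..<n}"
      and U: "\<forall>i<n. integrable M (\<lambda>x. U i x ^ 4) \<and> prob_space.expectation M (U i) = 0 \<and>
            (prob_space.expectation M (\<lambda>x. \<bar>U i x\<bar> ^ 4)) powr (1/4) \<le> K"
      and eq: "\<forall>x\<in>space M. \<forall>i<n. \<epsilon> i x = (\<Sum>j<n. W i j * \<epsilon> j x) + U i x"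
    have fin: "finite ((\<lambda>i. \<Sum>j<n. \<bar>W i j\<bar>) ` {..<n})" by simp
    have "0 \<in> {..<n}" using n by simp
    then have ne: "(\<lambda>i. \<Sum>j<n. \<bar>W i j\<bar>) ` {..<n} \<noteq> {}" by blast
    have rows: "\<forall>i<n. (\<Sum>j<n. \<bar>W i j\<bar>) \<le> \<tau>"
      using Max_ge[OF fin] mx by auto
    have tau0: "0 \<le> \<tau>"
    proof -
      have "\<tau> \<in> (\<lambda>i. \<Sum>j<n. \<bar>W i j\<bar>) ` {..<n}" using Max_in[OF fin ne] mx by simp
      then show ?thesis by (auto intro: sum_nonneg)
    qed
    interpret F: full M n U K A W \<tau> \<epsilon>
      using ps ind U eq assms tau0 rows supp sym
      by (intro full.intro nar.intro mx.intro full_axioms.intro nar_axioms.intro) auto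
    show "assumption2 M n (gdist A n) \<epsilon> (sqrt \<tau>) cc Bh Bh'"
      using F.main[where Bh=Bh and Bh'=Bh'] unfolding cc_def .
  qed
qed


end
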